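(* Let $K$ be any field. The Lie superalgebra $\mathbf Q=\mathrm{Lie}(v_0,v_1,v_2)$ is not hereditary just infinite: there is an ideal of finite codimension in $\mathbf Q$ which is not just infinite (it has a nonzero ideal of infinite codimension).
   Context: $\Lambda$ is the Grassmann algebra over $K$ on odd generators $x_0,x_1,\dots$; $x_i$ is identified with left multiplication; $\partial_i$ is the odd superderivation with $\partial_i(x_j)=\delta_{ij}$; pivot elements $v_i=\sum_{k\ge0}\big(\prod_{n=0}^{k-1}x_{i+3n}x_{i+3n+1}\big)\partial_{i+3k}$. $\mathbf Q$ is the Lie subsuperalgebra of $(\operatorname{End}\Lambda)^{(-)}$ generated by $v_0,v_1,v_2$ (closed also under squaring of odd elements when $\operatorname{char}K=2$). An algebra is just infinite if it is infinite-dimensional and every nonzero ideal has finite codimension; it is hereditary just infinite if every ideal of finite codimension is just infinite. *)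

theory Defs
  imports "HOL-Library.Poly_Mapping" "HOL-Library.FSet"
begin

text \<open>Lambda is the K-vector space with basis the monomials x_T = x_t1 x_t2 ... x_tk
  (t1 < ... < tk) indexed by finite sets T of naturals.  An element is a finitely
  supported coefficient function.\<close>

type_synonym 'k grass = "nat fset \<Rightarrow>\<^sub>0 'k"
type_synonym 'k gop = "'k grass \<Rightarrow> 'k grass"

definition gmono :: "nat fset \<Rightarrow> 'k::field grass" where
  "gmono T = Poly_Mapping.single T 1"

definition gsmult :: "'k::field \<Rightarrow> 'k grass \<Rightarrow> 'k grass" where
  "gsmult c f = Poly_Mapping.map (\<lambda>a. c * a) f"

definition lin_ext :: "(nat fset \<Rightarrow> 'k::field grass) \<Rightarrow> 'k gop" where
  "lin_ext g f = (\<Sum>T\<in>Poly_Mapping.keys f. gsmult (Poly_Mapping.lookup f T) (g T))"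

text \<open>Sign obtained by moving an odd generator x_i past the generators x_t, t in T, t < i.\<close>
definition gsign :: "nat \<Rightarrow> nat fset \<Rightarrow> 'k::field" where
  "gsign i T = (-1) ^ card {t \<in> fset T. t < i}"

text \<open>Left multiplication by x_i.\<close>
definition xop :: "nat \<Rightarrow> 'k::field gop" where
  "xop i = lin_ext (\<lambda>T. if i |\<in>| T then 0 else gsmult (gsign i T) (gmono (finsert i T)))"

text \<open>The odd superderivation d_i with d_i(x_j) = delta_ij.\<close>
definition dop :: "nat \<Rightarrow> 'k::field gop" where
  "dop i = lin_ext (\<lambda>T. if i |\<in>| T then gsmult (gsign i T) (gmono (T |-| {|i|})) else 0)"

definition pairprod :: "nat \<Rightarrow> nat \<Rightarrow> 'k::field gop" where
  "pairprod i k = foldr (\<lambda>n g. xop (i + 3*n) \<circ> xop (i + 3*n + 1) \<circ> g) [0..<k] id"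

text \<open>Pivot element v_i = sum_k (prod_{n<k} x_{i+3n} x_{i+3n+1}) d_{i+3k}.  On a basis
  monomial x_T only the terms with i+3k in T are nonzero, so the sum is finite.\<close>
definition pivot :: "nat \<Rightarrow> 'k::field gop" where
  "pivot i = lin_ext (\<lambda>T. \<Sum>k\<in>{k. i + 3*k |\<in>| T}. pairprod i k (dop (i + 3*k) (gmono T)))"

definition op_linear :: "'k::field gop \<Rightarrow> bool" where
  "op_linear A \<longleftrightarrow> (\<forall>f g. A (f + g) = A f + A g) \<and> (\<forall>c f. A (gsmult c f) = gsmult c (A f))"

definition op_zero :: "'k::field gop" where "op_zero = (\<lambda>f. 0)"
definition op_add :: "'k::field gop \<Rightarrow> 'k gop \<Rightarrow> 'k gop" where "op_add A B = (\<lambda>f. A f + B f)"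
definition op_smult :: "'k::field \<Rightarrow> 'k gop \<Rightarrow> 'k gop" where "op_smult c A = (\<lambda>f. gsmult c (A f))"

text \<open>Homogeneity: A is homogeneous of parity p (False = even, True = odd) if it maps
  each monomial of parity q into the span of monomials of parity q + p.\<close>
definition homog :: "bool \<Rightarrow> 'k::field gop \<Rightarrow> bool" where
  "homog p A \<longleftrightarrow> (\<forall>T S. Poly_Mapping.lookup (A (gmono T)) S \<noteq> 0 \<longrightarrow> (odd (fcard S + fcard T) \<longleftrightarrow> p))"

text \<open>Super commutator of homogeneous A (parity p), B (parity q):
  [A,B] = AB - (-1)^{pq} BA.\<close>
definition sbr :: "bool \<Rightarrow> bool \<Rightarrow> 'k::field gop \<Rightarrow> 'k gop \<Rightarrow> 'k gop" where
  "sbr p q A B = op_add (A \<circ> B) (op_smult (if p \<and> q then 1 else -1) (B \<circ> A))"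

definition op_span :: "'k::field gop set \<Rightarrow> 'k gop set" where
  "op_span F = {(\<lambda>f. \<Sum>A\<in>G. gsmult (c A) (A f)) | G c. finite G \<and> G \<subseteq> F}"

definition subspace_op :: "'k::field gop set \<Rightarrow> bool" where
  "subspace_op L \<longleftrightarrow> (\<forall>A\<in>L. op_linear A) \<and> op_zero \<in> L \<and>
     (\<forall>A\<in>L. \<forall>B\<in>L. op_add A B \<in> L) \<and> (\<forall>c. \<forall>A\<in>L. op_smult c A \<in> L)"

definition graded :: "'k::field gop set \<Rightarrow> bool" where
  "graded L \<longleftrightarrow> (\<forall>A\<in>L. \<exists>B\<in>L. \<exists>C\<in>L. homog False B \<and> homog True C \<and> A = op_add B C)"

definition lie_subsuper :: "'k::field gop set \<Rightarrow> bool" where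
  "lie_subsuper L \<longleftrightarrow> subspace_op L \<and> graded L \<and>
     (\<forall>A\<in>L. \<forall>B\<in>L. \<forall>p q. homog p A \<longrightarrow> homog q B \<longrightarrow> sbr p q A B \<in> L) \<and>
     ((2::'k) = 0 \<longrightarrow> (\<forall>A\<in>L. homog True A \<longrightarrow> A \<circ> A \<in> L))"

definition Qalg :: "'k::field gop set" where
  "Qalg = \<Inter>{L. lie_subsuper L \<and> pivot 0 \<in> L \<and> pivot 1 \<in> L \<and> pivot 2 \<in> L}"

definition is_ideal :: "'k::field gop set \<Rightarrow> 'k gop set \<Rightarrow> bool" where
  "is_ideal J I \<longleftrightarrow> I \<subseteq> J \<and> subspace_op I \<and> graded I \<and>
     (\<forall>A\<in>J. \<forall>B\<in>I. \<forall>p q. homog p A \<longrightarrow> homog q B \<longrightarrow> sbr p q A B \<in> I) \<and>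
     ((2::'k) = 0 \<longrightarrow> (\<forall>B\<in>I. homog True B \<longrightarrow> B \<circ> B \<in> I))"

definition fin_codim :: "'k::field gop set \<Rightarrow> 'k gop set \<Rightarrow> bool" where
  "fin_codim J I \<longleftrightarrow> (\<exists>F. finite F \<and> F \<subseteq> J \<and> J \<subseteq> {op_add B C | B C. B \<in> I \<and> C \<in> op_span F})"

definition just_infinite :: "'k::field gop set \<Rightarrow> bool" where
  "just_infinite J \<longleftrightarrow> \<not> fin_codim J {op_zero} \<and>
     (\<forall>I. is_ideal J I \<and> I \<noteq> {op_zero} \<longrightarrow> fin_codim J I)"

definition hereditary_just_infinite :: "'k::field gop set \<Rightarrow> bool" where
  "hereditary_just_infinite J \<longleftrightarrow> (\<forall>I. is_ideal J I \<and> fin_codim J I \<longrightarrow> just_infinite I)"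

end

theory Submission
  imports Defs "HOL-Library.Function_Algebras" "HOL.Vector_Spaces"
begin

lemma lookup_gsmult[simp]: "Poly_Mapping.lookup (gsmult c f) S = c * Poly_Mapping.lookup f S"
  unfolding gsmult_def by transfer (simp add: when_def)

lemma lookup_gmono: "Poly_Mapping.lookup (gmono T) S = (if S = T then 1 else 0)"
  unfolding gmono_def by (simp add: lookup_single)

lemma gsmult_add: "gsmult c (f + g) = gsmult c f + gsmult c g"
  by (rule poly_mapping_eqI) (simp add: lookup_add algebra_simps)
lemma gsmult_add2: "gsmult (c + d) f = gsmult c f + gsmult d f"
  by (rule poly_mapping_eqI) (simp add: lookup_add algebra_simps)
lemma gsmult_gsmult[simp]: "gsmult c (gsmult d f) = gsmult (c * d) f"
  by (rule poly_mapping_eqI) (simp add: algebra_simps)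
lemma gsmult_one[simp]: "gsmult 1 f = f"
  by (rule poly_mapping_eqI) simp
lemma gsmult_zero[simp]: "gsmult 0 f = 0"
  by (rule poly_mapping_eqI) simp
lemma gsmult_zero2[simp]: "gsmult c 0 = 0"
  by (rule poly_mapping_eqI) simp
lemma gsmult_m1[simp]: "gsmult (-1) f = - f"
  by (rule poly_mapping_eqI) simp
lemma gsmult_neg: "gsmult c (- f) = - gsmult c f"
  by (rule poly_mapping_eqI) simp
lemma gsmult_neg2: "gsmult (- c) f = - gsmult c f"
  by (rule poly_mapping_eqI) simp
lemma gsmult_diff: "gsmult c (f - g) = gsmult c f - gsmult c g"
  by (rule poly_mapping_eqI) (simp add: lookup_minus algebra_simps)
lemma gsmult_sum: "gsmult c (sum h K) = (\<Sum>x\<in>K. gsmult c (h x))"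
  by (rule poly_mapping_eqI) (simp add: lookup_sum sum_distrib_left)

lemma grass_expand: "f = (\<Sum>T\<in>Poly_Mapping.keys f. gsmult (Poly_Mapping.lookup f T) (gmono T))"
proof (rule poly_mapping_eqI)
  fix S
  have "(\<Sum>T\<in>Poly_Mapping.keys f. Poly_Mapping.lookup f T * (if S = T then 1 else 0))
        = (\<Sum>T\<in>Poly_Mapping.keys f. if T = S then Poly_Mapping.lookup f S else 0)"
    by (rule sum.cong) auto
  also have "\<dots> = Poly_Mapping.lookup f S"
    by (simp add: in_keys_iff)
  finally show "Poly_Mapping.lookup f S = Poly_Mapping.lookup (\<Sum>T\<in>Poly_Mapping.keys f. gsmult (Poly_Mapping.lookup f T) (gmono T)) S"
    by (simp add: lookup_sum lookup_gmono)
qed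

lemma lin_ext_sub:
  assumes "finite K" "Poly_Mapping.keys f \<subseteq> K"
  shows "lin_ext g f = (\<Sum>T\<in>K. gsmult (Poly_Mapping.lookup f T) (g T))"
  unfolding lin_ext_def
  by (rule sum.mono_neutral_left) (use assms in \<open>auto simp: in_keys_iff\<close>)

lemma lin_ext_linear: "op_linear (lin_ext g)"
  unfolding op_linear_def
proof (intro conjI allI)
  fix f1 f2 :: "'a grass"
  let ?K = "Poly_Mapping.keys f1 \<union> Poly_Mapping.keys f2"
  have k: "Poly_Mapping.keys (f1 + f2) \<subseteq> ?K" by (rule keys_add)
  show "lin_ext g (f1 + f2) = lin_ext g f1 + lin_ext g f2"
    using lin_ext_sub[of ?K f1 g] lin_ext_sub[of ?K f2 g] lin_ext_sub[of ?K "f1+f2" g] k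
    by (simp add: lookup_add gsmult_add2 sum.distrib)
next
  fix c and f :: "'a grass"
  have k: "Poly_Mapping.keys (gsmult c f) \<subseteq> Poly_Mapping.keys f"
    by (auto simp: in_keys_iff)
  show "lin_ext g (gsmult c f) = gsmult c (lin_ext g f)"
    using lin_ext_sub[of "Poly_Mapping.keys f" "gsmult c f" g] k
    by (simp add: lin_ext_def gsmult_sum)
qed

lemma lin_ext_mono[simp]: "lin_ext g (gmono T) = g T"
proof -
  have "lin_ext g (gmono T) = (\<Sum>S\<in>{T}. gsmult (Poly_Mapping.lookup (gmono T) S) (g S))"
    by (rule lin_ext_sub) (auto simp: in_keys_iff lookup_gmono split: if_splits)
  then show ?thesis by (simp add: lookup_gmono)
qed

lemma lin_zero: "op_linear A \<Longrightarrow> A 0 = 0"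
  unfolding op_linear_def by (metis gsmult_zero gsmult_zero2)
lemma lin_add: "op_linear A \<Longrightarrow> A (f + g) = A f + A g"
  unfolding op_linear_def by blast
lemma lin_smult: "op_linear A \<Longrightarrow> A (gsmult c f) = gsmult c (A f)"
  unfolding op_linear_def by blast
lemma lin_neg: "op_linear A \<Longrightarrow> A (- f) = - A f"
  by (metis gsmult_m1 lin_smult)
lemma lin_diff: "op_linear A \<Longrightarrow> A (f - g) = A f - A g"
  by (metis diff_conv_add_uminus lin_add lin_neg)
lemma lin_sum: "op_linear A \<Longrightarrow> A (sum h K) = (\<Sum>x\<in>K. A (h x))"
  by (induction K rule: infinite_finite_induct) (auto simp: lin_zero lin_add)

lemma lin_expand: "op_linear A \<Longrightarrow> A f = (\<Sum>T\<in>Poly_Mapping.keys f. gsmult (Poly_Mapping.lookup f T) (A (gmono T)))"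
  by (subst grass_expand) (simp add: lin_sum lin_smult)

lemma lin_eqI:
  assumes "op_linear A" "op_linear B" "\<And>T. A (gmono T) = B (gmono T)"
  shows "A f = B f"
  using lin_expand[OF assms(1), of f] lin_expand[OF assms(2), of f] assms(3) by simp

lemma lin_comp: "op_linear A \<Longrightarrow> op_linear B \<Longrightarrow> op_linear (\<lambda>f. A (B f))"
  unfolding op_linear_def by auto
lemma lin_plus: "op_linear A \<Longrightarrow> op_linear B \<Longrightarrow> op_linear (\<lambda>f. A f + B f)"
  unfolding op_linear_def by (auto simp: gsmult_add)
lemma lin_minus: "op_linear A \<Longrightarrow> op_linear B \<Longrightarrow> op_linear (\<lambda>f. A f - B f)"
  unfolding op_linear_def by (auto simp: gsmult_diff)
lemma lin_uminus: "op_linear A \<Longrightarrow> op_linear (\<lambda>f. - A f)"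
  unfolding op_linear_def by (auto simp: gsmult_neg)
lemma lin_sm: "op_linear A \<Longrightarrow> op_linear (\<lambda>f. gsmult c (A f))"
  unfolding op_linear_def by (auto simp: gsmult_add mult.commute)
lemma lin_id: "op_linear (\<lambda>f. f)"
  unfolding op_linear_def by auto
lemma lin_zeroop: "op_linear (\<lambda>f. 0)"
  unfolding op_linear_def by auto
lemma lin_sumop: "(\<And>i. i \<in> K \<Longrightarrow> op_linear (A i)) \<Longrightarrow> op_linear (\<lambda>f. \<Sum>i\<in>K. A i f)"
  unfolding op_linear_def by (auto simp: sum.distrib gsmult_sum)

lemma supp_lin:
  assumes "op_linear A" "\<And>T S. Poly_Mapping.lookup (A (gmono T)) S \<noteq> 0 \<Longrightarrow> P T S"
    and "Poly_Mapping.lookup (A f) S \<noteq> 0"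
  shows "\<exists>T. Poly_Mapping.lookup f T \<noteq> 0 \<and> P T S"
proof -
  have "(\<Sum>T\<in>Poly_Mapping.keys f. Poly_Mapping.lookup f T * Poly_Mapping.lookup (A (gmono T)) S) \<noteq> 0"
    using assms(3) by (subst (asm) lin_expand[OF assms(1)]) (simp add: lookup_sum)
  then obtain T where "T \<in> Poly_Mapping.keys f" "Poly_Mapping.lookup (A (gmono T)) S \<noteq> 0"
    by (metis (no_types, lifting) mult_zero_right sum.neutral)
  then show ?thesis using assms(2) by (auto simp: in_keys_iff)
qed

lemma gsign_sq[simp]: "gsign i T * gsign i T = (1::'k::field)"
  unfolding gsign_def by (simp add: power_mult_distrib[symmetric])

lemma gsign_ins:
  assumes "j |\<notin>| T"
  shows "gsign i (finsert j T) = (if j < i then - gsign i T else (gsign i T :: 'k::field))"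
proof -
  have e: "{t \<in> fset (finsert j T). t < i} = (if j < i then insert j {t \<in> fset T. t < i} else {t \<in> fset T. t < i})"
    by auto
  have "j \<notin> {t \<in> fset T. t < i}" using assms by auto
  moreover have "finite {t \<in> fset T. t < i}" by simp
  ultimately show ?thesis unfolding gsign_def e by auto
qed

lemma gsign_del:
  assumes "j |\<in>| T"
  shows "gsign i (T |-| {|j|}) = (if j < i then - gsign i T else (gsign i T :: 'k::field))"
proof -
  have "finsert j (T |-| {|j|}) = T" using assms by auto
  moreover have "j |\<notin>| T |-| {|j|}" by auto
  ultimately have "gsign i T = (if j < i then - gsign i (T |-| {|j|}) else (gsign i (T |-| {|j|}) :: 'k))"
    using gsign_ins[of j "T |-| {|j|}" i] by metis
  then show ?thesis by auto
qed

lemma gsign_ii[simp]: "gsign i (finsert i T) = gsign i T"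
  unfolding gsign_def by (rule arg_cong[where f="\<lambda>n. (-1)^n"]) (rule arg_cong[where f=card], auto)
lemma gsign_ii2[simp]: "gsign i (T |-| {|i|}) = gsign i T"
  unfolding gsign_def by (rule arg_cong[where f="\<lambda>n. (-1)^n"]) (rule arg_cong[where f=card], auto)

lemma lin_xop: "op_linear (xop j)" unfolding xop_def by (rule lin_ext_linear)
lemma lin_dop: "op_linear (dop j)" unfolding dop_def by (rule lin_ext_linear)

lemma xop_mono: "xop j (gmono T) = (if j |\<in>| T then 0 else gsmult (gsign j T) (gmono (finsert j T)))"
  unfolding xop_def by simp
lemma dop_mono: "dop j (gmono T) = (if j |\<in>| T then gsmult (gsign j T) (gmono (T |-| {|j|})) else 0)"
  unfolding dop_def by simp

lemmas xop_sm = lin_smult[OF lin_xop]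
lemmas dop_sm = lin_smult[OF lin_dop]

lemma xop_0[simp]: "xop j 0 = 0" by (rule lin_zero[OF lin_xop])
lemma dop_0[simp]: "dop j 0 = 0" by (rule lin_zero[OF lin_dop])
lemma gsmult_eqI: "c = d \<Longrightarrow> gsmult c f = gsmult d f" by simp

lemma xx_mono: "xop i (xop j (gmono T)) = - xop j (xop i (gmono T :: 'k::field grass))"
proof (cases "i = j")
  case True then show ?thesis by (simp add: xop_mono xop_sm)
next
  case ne: False
  show ?thesis
  proof (cases "i |\<in>| T \<or> j |\<in>| T")
    case True then show ?thesis using ne by (auto simp: xop_mono xop_sm)
  next
    case False
    have c: "finsert i (finsert j T) = finsert j (finsert i T)" by auto
    show ?thesis using False ne
      by (simp add: xop_mono xop_sm gsign_ins c mult.commute flip: gsmult_neg2)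
  qed
qed


lemma xx_anti: "xop i (xop j f) = - xop j (xop i (f::'k::field grass))"
proof (rule lin_eqI[where A="\<lambda>f. xop i (xop j f)" and B="\<lambda>f. - xop j (xop i f)", simplified])
  show "op_linear (\<lambda>f. xop i (xop j (f::'k grass)))" by (rule lin_comp[OF lin_xop lin_xop])
  show "op_linear (\<lambda>f. - xop j (xop i (f::'k grass)))" by (rule lin_uminus[OF lin_comp[OF lin_xop lin_xop]])
qed (rule xx_mono)

lemma dd_mono: "dop i (dop j (gmono T)) = - dop j (dop i (gmono T :: 'k::field grass))"
proof (cases "i = j")
  case True then show ?thesis by (simp add: dop_mono dop_sm)
next
  case ne: False
  show ?thesis
  proof (cases "i |\<in>| T \<and> j |\<in>| T")
    case False then show ?thesis using ne by (auto simp: dop_mono dop_sm)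
  next
    case True
    have c: "T |-| {|j|} |-| {|i|} = T |-| {|i|} |-| {|j|}" by auto
    show ?thesis using True ne
      by (simp add: dop_mono dop_sm gsign_del c mult.commute flip: gsmult_neg2)
  qed
qed

lemma dd_anti: "dop i (dop j f) = - dop j (dop i (f::'k::field grass))"
proof (rule lin_eqI[where A="\<lambda>f. dop i (dop j f)" and B="\<lambda>f. - dop j (dop i f)", simplified])
  show "op_linear (\<lambda>f. dop i (dop j (f::'k grass)))" by (rule lin_comp[OF lin_dop lin_dop])
  show "op_linear (\<lambda>f. - dop j (dop i (f::'k grass)))" by (rule lin_uminus[OF lin_comp[OF lin_dop lin_dop]])
qed (rule dd_mono)

lemma dx_mono: "dop i (xop j (gmono T)) = (if i = j then gmono T else 0) - xop j (dop i (gmono T :: 'k::field grass))"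
proof (cases "i = j")
  case True
  have a: "finsert j (T |-| {|j|}) = T" if "j |\<in>| T" using that by auto
  have b: "finsert j T |-| {|j|} = T" if "j |\<notin>| T" using that by auto
  have a2: "finsert j T = T" if "j |\<in>| T" using that by auto
  show ?thesis using True by (auto simp: dop_mono dop_sm xop_mono xop_sm a b a2)
next
  case ne: False
  show ?thesis
  proof (cases "j |\<notin>| T \<and> i |\<in>| T")
    case False then show ?thesis using ne by (auto simp: dop_mono dop_sm xop_mono xop_sm)
  next
    case True
    have c: "finsert j T |-| {|i|} = finsert j (T |-| {|i|})" using ne by auto
    show ?thesis using True ne
      by (auto simp: dop_mono dop_sm xop_mono xop_sm gsign_del gsign_ins c mult.commute simp flip: gsmult_neg2)
  qed
qed

lemma dx_rel: "dop i (xop j f) = (if i = j then f else 0) - xop j (dop i (f::'k::field grass))"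
proof (rule lin_eqI[where A="\<lambda>f. dop i (xop j f)" and B="\<lambda>f. (if i = j then f else 0) - xop j (dop i f)", simplified])
  show "op_linear (\<lambda>f. dop i (xop j (f::'k grass)))" by (rule lin_comp[OF lin_dop lin_xop])
  have "op_linear (\<lambda>f. (if i = j then f else (0::'k grass)))" by (cases "i = j") (simp_all add: lin_id lin_zeroop)
  then show "op_linear (\<lambda>f. (if i = j then f else 0) - xop j (dop i (f::'k grass)))"
    by (rule lin_minus[OF _ lin_comp[OF lin_xop lin_dop]])
qed (rule dx_mono)

lemma xop_supp:
  assumes "Poly_Mapping.lookup (xop j g) S \<noteq> (0::'k::field)"
  shows "\<exists>T. Poly_Mapping.lookup g T \<noteq> 0 \<and> j |\<notin>| T \<and> S = finsert j T"
proof -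
  have "\<And>T S. Poly_Mapping.lookup (xop j (gmono T)) S \<noteq> (0::'k) \<Longrightarrow> j |\<notin>| T \<and> S = finsert j T"
    by (simp add: xop_mono lookup_gmono split: if_splits)
  from supp_lin[OF lin_xop, where P="\<lambda>T S. j |\<notin>| T \<and> S = finsert j T", OF this assms]
  show ?thesis by blast
qed

lemma dop_supp:
  assumes "Poly_Mapping.lookup (dop j g) S \<noteq> (0::'k::field)"
  shows "\<exists>T. Poly_Mapping.lookup g T \<noteq> 0 \<and> j |\<in>| T \<and> S = T |-| {|j|}"
proof -
  have "\<And>T S. Poly_Mapping.lookup (dop j (gmono T)) S \<noteq> (0::'k) \<Longrightarrow> j |\<in>| T \<and> S = T |-| {|j|}"
    by (simp add: dop_mono lookup_gmono split: if_splits)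
  from supp_lin[OF lin_dop, where P="\<lambda>T S. j |\<in>| T \<and> S = T |-| {|j|}", OF this assms]
  show ?thesis by blast
qed

lemma xop_in: "Poly_Mapping.lookup (xop j g) S \<noteq> (0::'k::field) \<Longrightarrow> j |\<in>| S"
  using xop_supp by fastforce

definition bnd :: "nat \<Rightarrow> 'k::field grass \<Rightarrow> bool" where
  "bnd B g \<longleftrightarrow> (\<forall>S. Poly_Mapping.lookup g S \<noteq> 0 \<longrightarrow> (\<forall>t. t |\<in>| S \<longrightarrow> t < B))"

lemma bnd_xop: "bnd B g \<Longrightarrow> j < B \<Longrightarrow> bnd B (xop j g)"
  unfolding bnd_def by (metis finsert_iff xop_supp)
lemma bnd_dop: "bnd B g \<Longrightarrow> bnd B (dop j g)"
  unfolding bnd_def by (metis fminus_iff dop_supp)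
lemma bnd_mono: "bnd B g \<Longrightarrow> B \<le> B' \<Longrightarrow> bnd B' g"
  unfolding bnd_def by force
lemma bnd_ex: "\<exists>B. bnd B (g::'k::field grass)"
proof -
  let ?U = "\<Union>S\<in>Poly_Mapping.keys g. fset S"
  have "finite ?U" by simp
  then obtain B where "\<forall>t\<in>?U. t < B" using finite_nat_set_iff_bounded by blast
  then show ?thesis unfolding bnd_def by (metis UN_I in_keys_iff)
qed
lemma bnd_ex2: "\<exists>B. bnd B (g::'k::field grass) \<and> j < B"
proof -
  obtain B where "bnd B g" using bnd_ex by blast
  then show ?thesis by (intro exI[of _ "max B (Suc j)"]) (auto intro: bnd_mono)
qed

definition par :: "bool \<Rightarrow> 'k::field grass \<Rightarrow> bool" where
  "par q g \<longleftrightarrow> (\<forall>S. Poly_Mapping.lookup g S \<noteq> 0 \<longrightarrow> (odd (fcard S) \<longleftrightarrow> q))"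

lemma par_xop: "par q g \<Longrightarrow> par (\<not> q) (xop j g)"
proof (unfold par_def, intro allI impI)
  fix S assume a: "\<forall>S. poly_mapping.lookup g S \<noteq> 0 \<longrightarrow> odd (fcard S) = q"
    and b: "poly_mapping.lookup (xop j g) S \<noteq> 0"
  then obtain T where T: "poly_mapping.lookup g T \<noteq> 0" "j |\<notin>| T" "S = finsert j T"
    using xop_supp by blast
  then have "fcard S = Suc (fcard T)" by (simp add: fcard_finsert_disjoint)
  then show "odd (fcard S) = (\<not> q)" using a T by auto
qed
lemma par_dop: "par q g \<Longrightarrow> par (\<not> q) (dop j g)"
proof (unfold par_def, intro allI impI)
  fix S assume a: "\<forall>S. poly_mapping.lookup g S \<noteq> 0 \<longrightarrow> odd (fcard S) = q"
    and b: "poly_mapping.lookup (dop j g) S \<noteq> 0"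
  then obtain T where T: "poly_mapping.lookup g T \<noteq> 0" "j |\<in>| T" "S = T |-| {|j|}"
    using dop_supp by blast
  then have "fcard T = Suc (fcard S)"
    by (metis fcard_finsert_disjoint finsert_fminus fminus_iff finsertCI)
  then show "odd (fcard S) = (\<not> q)" using a T by auto
qed
lemma par_add: "par q f \<Longrightarrow> par q g \<Longrightarrow> par q (f + g)"
  unfolding par_def by (metis add.right_neutral add_0 lookup_add)
lemma par_zero: "par q 0"
  unfolding par_def by simp
lemma par_neg: "par q f \<Longrightarrow> par q (- f)"
  unfolding par_def by simp
lemma par_sm: "par q f \<Longrightarrow> par q (gsmult c f)"
  unfolding par_def by simp
lemma par_mono: "par (odd (fcard T)) (gmono T)"
  unfolding par_def by (simp add: lookup_gmono)

lemma down_induct: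
  fixes B n :: nat and P :: "nat \<Rightarrow> bool"
  assumes base: "\<And>n. B \<le> n \<Longrightarrow> P n"
    and step: "\<And>n. n < B \<Longrightarrow> P (n + 3) \<Longrightarrow> P n"
  shows "P n"
proof (induction "B - n" arbitrary: n rule: less_induct)
  case less
  show ?case
  proof (cases "B \<le> n")
    case True then show ?thesis by (rule base)
  next
    case False
    then have "B - (n + 3) < B - n" by simp
    then have "P (n + 3)" using less by blast
    then show ?thesis using False step by simp
  qed
qed

lemma pairprod_0[simp]: "pairprod n 0 = id"
  unfolding pairprod_def by simp

lemma pairprod_Suc: "pairprod n (Suc k) g = xop n (xop (n+1) (pairprod (n+3) k (g::'k::field grass)))"
proof -
  let ?F = "\<lambda>n m (h::'k grass \<Rightarrow> 'k grass). xop (n + 3*m) \<circ> xop (n + 3*m + 1) \<circ> h"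
  have e: "?F n \<circ> Suc = ?F (n+3)" by (rule ext)+ (simp add: algebra_simps)
  have "[0..<Suc k] = 0 # map Suc [0..<k]" by (simp add: map_Suc_upt upt_conv_Cons)
  then have "pairprod n (Suc k) = ?F n 0 (foldr (?F n) (map Suc [0..<k]) id)"
    unfolding pairprod_def by simp
  also have "foldr (?F n) (map Suc [0..<k]) id = foldr (?F n \<circ> Suc) [0..<k] id"
    by (simp add: foldr_map)
  also have "\<dots> = pairprod (n+3) k" unfolding pairprod_def e ..
  finally show ?thesis by simp
qed

lemma lin_pairprod: "op_linear (pairprod n k :: 'k::field gop)"
proof (induction k arbitrary: n)
  case 0 then show ?case by (simp add: id_def lin_id)
next
  case (Suc k)
  have "pairprod n (Suc k) = (\<lambda>g. xop n (xop (n+1) (pairprod (n+3) k (g::'k grass))))"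
    by (rule ext) (rule pairprod_Suc)
  then show ?case using Suc lin_comp lin_xop by metis
qed

lemma lin_pivot: "op_linear (pivot n)"
  unfolding pivot_def by (rule lin_ext_linear)

lemma finite_kset: "finite {k. n + 3*k |\<in>| (T::nat fset)}"
proof -
  have "{k. n + 3*k |\<in>| T} \<subseteq> {..fMax T}"
  proof
    fix x assume "x \<in> {k. n + 3*k |\<in>| T}"
    then have "n + 3*x \<le> fMax T" by (simp add: fMax_ge)
    then show "x \<in> {..fMax T}" by simp
  qed
  then show ?thesis using finite_subset by blast
qed

lemma pivot_mono: "pivot n (gmono T) = (\<Sum>k\<in>{k. n + 3*k |\<in>| T}. pairprod n k (dop (n + 3*k) (gmono T :: 'k::field grass)))"
  unfolding pivot_def by simp

lemma pivot_rec_mono: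
  "pivot n (gmono T) = dop n (gmono T) + xop n (xop (n+1) (pivot (n+3) (gmono T :: 'k::field grass)))"
proof -
  let ?K' = "{k. n + 3 + 3*k |\<in>| T}"
  let ?t = "\<lambda>k. pairprod n k (dop (n + 3*k) (gmono T :: 'k grass))"
  have K: "{k. n + 3*k |\<in>| T} = (if n |\<in>| T then insert 0 (Suc ` ?K') else Suc ` ?K')"
  proof (rule set_eqI)
    fix k show "k \<in> {k. n + 3*k |\<in>| T} \<longleftrightarrow> k \<in> (if n |\<in>| T then insert 0 (Suc ` ?K') else Suc ` ?K')"
      by (cases k) (auto simp: algebra_simps)
  qed
  have fin: "finite ?K'" using finite_kset[of "n+3" T] by simp
  have s: "sum ?t (Suc ` ?K') = xop n (xop (n+1) (pivot (n+3) (gmono T)))"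
  proof -
    have "sum ?t (Suc ` ?K') = (\<Sum>k\<in>?K'. ?t (Suc k))"
      by (rule sum.reindex_cong[where l=Suc]) auto
    also have "\<dots> = (\<Sum>k\<in>?K'. xop n (xop (n+1) (pairprod (n+3) k (dop (n + 3 + 3*k) (gmono T)))))"
      by (rule sum.cong) (simp_all add: pairprod_Suc algebra_simps)
    also have "\<dots> = xop n (xop (n+1) (\<Sum>k\<in>?K'. pairprod (n+3) k (dop (n + 3 + 3*k) (gmono T))))"
      by (simp add: lin_sum[OF lin_xop])
    also have "\<dots> = xop n (xop (n+1) (pivot (n+3) (gmono T)))"
      by (simp add: pivot_mono)
    finally show ?thesis .
  qed
  show ?thesis
  proof (cases "n |\<in>| T")
    case True
    have "0 \<notin> Suc ` ?K'" by auto
    then show ?thesis using True fin by (simp add: pivot_mono[of n] K s)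
  next
    case False
    then have "dop n (gmono T) = (0::'k grass)" by (simp add: dop_mono)
    then show ?thesis using False by (simp add: pivot_mono[of n] K s)
  qed
qed

lemma pivot_rec: "pivot n f = dop n f + xop n (xop (n+1) (pivot (n+3) (f :: 'k::field grass)))"
proof -
  have L: "op_linear (\<lambda>f. dop n f + xop n (xop (n+1) (pivot (n+3) (f :: 'k grass))))"
    by (rule lin_plus[OF lin_dop lin_comp[OF lin_xop lin_comp[OF lin_xop lin_pivot]]])
  show ?thesis by (rule lin_eqI[OF lin_pivot L]) (rule pivot_rec_mono)
qed

lemma pivot_mono0: "(\<forall>t. t |\<in>| T \<longrightarrow> t < n) \<Longrightarrow> pivot n (gmono T) = (0 :: 'k::field grass)"
proof -
  assume a: "\<forall>t. t |\<in>| T \<longrightarrow> t < n"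
  then have "{k. n + 3*k |\<in>| T} = {}" by force
  then show ?thesis by (simp add: pivot_mono)
qed

lemma pivot_bnd0: "bnd B g \<Longrightarrow> B \<le> n \<Longrightarrow> pivot n (g :: 'k::field grass) = 0"
proof -
  assume a: "bnd B g" "B \<le> n"
  have "pivot n g = (\<Sum>T\<in>Poly_Mapping.keys g. gsmult (Poly_Mapping.lookup g T) (pivot n (gmono T)))"
    by (rule lin_expand[OF lin_pivot])
  also have "\<dots> = 0"
  proof (rule sum.neutral, rule ballI)
    fix T assume "T \<in> Poly_Mapping.keys g"
    then have "\<forall>t. t |\<in>| T \<longrightarrow> t < n" using a unfolding bnd_def by (force simp: in_keys_iff)
    then show "gsmult (Poly_Mapping.lookup g T) (pivot n (gmono T)) = 0" by (simp add: pivot_mono0)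
  qed
  finally show ?thesis .
qed

lemma pivot_par: "par q g \<Longrightarrow> par (\<not> q) (pivot n (g :: 'k::field grass))"
proof -
  assume pq: "par q g"
  obtain B where B: "bnd B g" using bnd_ex by blast
  show ?thesis
  proof (induction n rule: down_induct[where B=B])
    case (1 n) then show ?case using pivot_bnd0[OF B] by (simp add: par_zero)
  next
    case (2 n)
    have "par q (xop (n+1) (pivot (n+3) g))" using par_xop[OF 2(2)] by simp
    then have "par (\<not> q) (xop n (xop (n+1) (pivot (n+3) g)))" by (rule par_xop)
    then have "par (\<not> q) (dop n g + xop n (xop (n+1) (pivot (n+3) g)))"
      using pq by (intro par_add par_dop)
    then show ?case by (simp add: pivot_rec[of n g])
  qed
qed

lemmas X_add = lin_add[OF lin_xop] and X_neg = lin_neg[OF lin_xop] and X_diff = lin_diff[OF lin_xop]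
lemmas D_add = lin_add[OF lin_dop] and D_neg = lin_neg[OF lin_dop] and D_diff = lin_diff[OF lin_dop]
lemmas V_add = lin_add[OF lin_pivot] and V_neg = lin_neg[OF lin_pivot] and V_diff = lin_diff[OF lin_pivot]
lemmas lin_simps = X_add X_neg X_diff D_add D_neg D_diff V_add V_neg V_diff

lemma xx_same: "xop i (xop i f) = (0::'k::field grass)"
proof -
  have L: "op_linear (\<lambda>f. xop i (xop i (f::'k grass)))" by (rule lin_comp[OF lin_xop lin_xop])
  have "\<And>T. xop i (xop i (gmono T)) = (0::'k grass)"
    by (simp add: xop_mono xop_sm)
  then show ?thesis using lin_eqI[OF L lin_zeroop] by simp
qed

lemma xxx_comm: "xop a (xop b (xop j h)) = xop j (xop a (xop b (h::'k::field grass)))"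
  by (simp add: xx_anti[of b j] xx_anti[of a j] X_neg)

lemma dxx: "m \<noteq> a \<Longrightarrow> m \<noteq> b \<Longrightarrow> dop m (xop a (xop b h)) = xop a (xop b (dop m (h::'k::field grass)))"
  by (simp add: dx_rel X_neg)

lemma piv_x_aux:
  assumes "bnd B g" "j < B"
  shows "j < n + 3 \<longrightarrow> pivot n (xop j g) = (if j = n then g else 0) - xop j (pivot n (g::'k::field grass))"
proof (induction n rule: down_induct[where B=B])
  case (1 n)
  have "bnd B (xop j g)" using assms by (rule bnd_xop)
  then have "pivot n (xop j g) = 0" using 1 by (rule pivot_bnd0)
  moreover have "pivot n g = 0" using assms(1) 1 by (rule pivot_bnd0)
  moreover have "j \<noteq> n" using 1 assms by simp
  ultimately show ?case by simp
next
  case (2 n)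
  show ?case
  proof
    assume j: "j < n + 3"
    then have ih: "pivot (n+3) (xop j g) = - xop j (pivot (n+3) g)" using 2(2) by simp
    have "pivot n (xop j g) = dop n (xop j g) + xop n (xop (n+1) (pivot (n+3) (xop j g)))"
      by (rule pivot_rec)
    also have "\<dots> = ((if n = j then g else 0) - xop j (dop n g)) - xop j (xop n (xop (n+1) (pivot (n+3) g)))"
      by (simp add: ih dx_rel X_neg xxx_comm)
    also have "\<dots> = (if j = n then g else 0) - xop j (pivot n g)"
      by (simp add: pivot_rec[of n g] X_add)
    finally show "pivot n (xop j g) = (if j = n then g else 0) - xop j (pivot n g)" .
  qed
qed

lemma piv_x: "j < n + 3 \<Longrightarrow> pivot n (xop j g) = (if j = n then g else 0) - xop j (pivot n (g::'k::field grass))"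
  using bnd_ex2[of g j] piv_x_aux by blast

lemma piv_x_ne: "j < n + 3 \<Longrightarrow> j \<noteq> n \<Longrightarrow> pivot n (xop j g) = - xop j (pivot n (g::'k::field grass))"
  by (simp add: piv_x)

lemma dpiv_aux:
  assumes "bnd B g"
  shows "m < p \<longrightarrow> dop m (pivot p g) = - pivot p (dop m (g::'k::field grass))"
proof (induction p rule: down_induct[where B=B])
  case (1 p)
  have "bnd B (dop m g)" using assms by (rule bnd_dop)
  then have "pivot p (dop m g) = 0" using 1 by (rule pivot_bnd0)
  moreover have "pivot p g = 0" using assms(1) 1 by (rule pivot_bnd0)
  ultimately show ?case by simp
next
  case (2 p)
  show ?case
  proof
    assume m: "m < p"
    then have ih: "dop m (pivot (p+3) g) = - pivot (p+3) (dop m g)" using 2(2) by simp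
    have "dop m (pivot p g) = dop m (dop p g) + dop m (xop p (xop (p+1) (pivot (p+3) g)))"
      by (simp add: pivot_rec[of p g] D_add)
    also have "\<dots> = - dop p (dop m g) - xop p (xop (p+1) (pivot (p+3) (dop m g)))"
      using m by (simp add: dd_anti[of m p] dxx ih X_neg)
    also have "\<dots> = - pivot p (dop m g)"
      by (simp add: pivot_rec[of p "dop m g"])
    finally show "dop m (pivot p g) = - pivot p (dop m g)" .
  qed
qed

lemma dpiv: "m < p \<Longrightarrow> dop m (pivot p g) = - pivot p (dop m (g::'k::field grass))"
  using bnd_ex[of g] dpiv_aux by blast

lemma pivd: "m < p \<Longrightarrow> pivot p (dop m g) = - dop m (pivot p (g::'k::field grass))"
  by (simp add: dpiv)

lemma homog_pivot: "homog True (pivot n :: 'k::field gop)"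
  unfolding homog_def
proof (intro allI impI)
  fix T S assume a: "Poly_Mapping.lookup (pivot n (gmono T :: 'k grass)) S \<noteq> 0"
  have "par (\<not> odd (fcard T)) (pivot n (gmono T :: 'k grass))" by (rule pivot_par[OF par_mono])
  then have "odd (fcard S) = (\<not> odd (fcard T))" using a unfolding par_def by blast
  then show "odd (fcard S + fcard T) = True" by presburger
qed

lemma rec1: "pivot (Suc n) h = dop (Suc n) h + xop (Suc n) (xop (Suc (Suc n)) (pivot (n+4) (h::'k::field grass)))"
proof -
  have a: "Suc n + 1 = Suc (Suc n)" "Suc n + 3 = n + 4" by simp_all
  show ?thesis using pivot_rec[of "Suc n" h] unfolding a .
qed

lemma brk_b: "pivot n (pivot (Suc n) g) + pivot (Suc n) (pivot n g) = - xop n (pivot (n+3) (g::'k::field grass))"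
proof -
  define w where "w = pivot (n+3) g"
  have A3: "pivot (n+3) (pivot (Suc n) g) = - dop (Suc n) w + xop (Suc n) (xop (Suc (Suc n)) (pivot (n+3) (pivot (n+4) g)))"
    by (simp add: rec1[of n g] V_add pivd piv_x_ne X_neg w_def)
  have P1: "pivot n (pivot (Suc n) g) = - pivot (Suc n) (dop n g) - xop n (xop (Suc n) (dop (Suc n) w))"
    by (simp add: pivot_rec[of n "pivot (Suc n) g"] A3 dpiv X_add X_diff X_neg xx_same)
  have B3: "dop (Suc n) (pivot n g) = dop (Suc n) (dop n g) - xop n w + xop n (xop (Suc n) (dop (Suc n) w))"
    by (simp add: pivot_rec[of n g] D_add dx_rel X_diff X_neg w_def)
  have B4: "pivot (n+4) (pivot n g) = pivot (n+4) (dop n g) + xop n (xop (Suc n) (pivot (n+4) w))"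
    by (simp add: pivot_rec[of n g] V_add piv_x_ne X_neg w_def)
  have B5: "xop (Suc n) (xop (Suc (Suc n)) (xop n (xop (Suc n) u))) = (0::'k grass)" for u
    by (simp add: xxx_comm[of n "Suc n" "Suc (Suc n)", symmetric] xx_anti[of "Suc n" n] xx_same X_neg)
  have P2: "pivot (Suc n) (pivot n g) = dop (Suc n) (dop n g) - xop n w + xop n (xop (Suc n) (dop (Suc n) w))
      + xop (Suc n) (xop (Suc (Suc n)) (pivot (n+4) (dop n g)))"
    by (simp add: rec1[of n "pivot n g"] B3 B4 X_add B5)
  have C: "pivot (Suc n) (dop n g) = dop (Suc n) (dop n g) + xop (Suc n) (xop (Suc (Suc n)) (pivot (n+4) (dop n g)))"
    by (rule rec1)
  show ?thesis unfolding P1 P2 C w_def[symmetric] by (simp add: algebra_simps)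
qed

lemma brk_c: "pivot n (xop n (pivot (n+3) g)) - xop n (pivot (n+3) (pivot n g)) = pivot (n+3) (g::'k::field grass)"
proof -
  define w where "w = pivot (n+3) g"
  have C1: "pivot n (xop n w) = w - xop n (pivot n w)" by (simp add: piv_x)
  have C2: "xop n (pivot n w) = xop n (dop n w)"
    by (simp add: pivot_rec[of n w] X_add xx_same)
  have C3: "pivot (n+3) (pivot n g) = - dop n w + xop n (xop (n+1) (pivot (n+3) w))"
    by (simp add: pivot_rec[of n g] V_add pivd piv_x_ne X_neg w_def)
  have C4: "xop n (pivot (n+3) (pivot n g)) = - xop n (dop n w)"
    by (simp add: C3 X_add X_neg X_diff xx_same)
  show ?thesis unfolding w_def[symmetric] C1 C2 C4 by simp
qed

lemma brk_13: "pivot 1 (pivot 3 f) + pivot 3 (pivot 1 f) = - xop 1 (xop 2 (xop 3 (pivot 6 (f::'k::field grass))))"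
proof -
  have a: "pivot (Suc 0) h = dop (Suc 0) h + xop (Suc 0) (xop 2 (pivot 4 (h::'k grass)))" for h
    using rec1[of 0 h] by (simp add: numeral_2_eq_2)
  have b: "pivot 3 (pivot 4 f) + pivot 4 (pivot 3 f) = - xop 3 (pivot 6 f)"
    using brk_b[of 3 f] by simp
  have "pivot 1 (pivot 3 f) + pivot 3 (pivot 1 f) = xop 1 (xop 2 (pivot 3 (pivot 4 f) + pivot 4 (pivot 3 f)))"
    by (simp add: a[of "pivot 3 f"] a[of f] V_add pivd piv_x_ne X_add X_neg)
  then show ?thesis by (simp add: b X_neg)
qed

lemma zlem: "- xop 0 (pivot 3 (pivot 1 f)) + pivot 1 (xop 0 (pivot 3 f))
   = xop 0 (xop 1 (xop 2 (xop 3 (pivot 6 (f::'k::field grass)))))"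
proof -
  have "pivot 1 (xop 0 (pivot 3 f)) = - xop 0 (pivot 1 (pivot 3 f))" by (simp add: piv_x_ne)
  then have "- xop 0 (pivot 3 (pivot 1 f)) + pivot 1 (xop 0 (pivot 3 f))
      = - xop 0 (pivot 1 (pivot 3 f) + pivot 3 (pivot 1 f))" by (simp add: X_add)
  also have "\<dots> = xop 0 (xop 1 (xop 2 (xop 3 (pivot 6 f))))" unfolding brk_13 by (simp add: X_neg)
  finally show ?thesis .
qed

lemma psi_pivot: "Poly_Mapping.lookup (pivot n (gmono {|m|}) :: 'k::field grass) {||} = (if m = n then 1 else 0)"
proof -
  have x: "Poly_Mapping.lookup (xop n (xop (Suc n) (pivot (n+3) (gmono {|m|}))) :: 'k grass) {||} = 0"
  proof (rule ccontr)
    assume "Poly_Mapping.lookup (xop n (xop (Suc n) (pivot (n+3) (gmono {|m|}))) :: 'k grass) {||} \<noteq> 0"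
    then have "n |\<in>| {||}" by (rule xop_in)
    then show False by simp
  qed
  have d: "Poly_Mapping.lookup (dop n (gmono {|m|}) :: 'k grass) {||} = (if m = n then 1 else 0)"
  proof -
    have e: "{t. t = n \<and> t < n} = {}" by auto
    show ?thesis by (auto simp: dop_mono lookup_gmono gsign_def e)
  qed
  show ?thesis by (simp add: pivot_rec[of n] lookup_add x d)
qed

lemma homog_par:
  assumes "op_linear A" "homog p A" "par q g"
  shows "par (q \<noteq> p) (A (g::'k::field grass))"
  unfolding par_def
proof (intro allI impI)
  fix S assume "Poly_Mapping.lookup (A g) S \<noteq> 0"
  from supp_lin[OF assms(1), where P="\<lambda>T S. Poly_Mapping.lookup (A (gmono T)) S \<noteq> 0", OF _ this]
  obtain T where T: "Poly_Mapping.lookup g T \<noteq> 0" "Poly_Mapping.lookup (A (gmono T)) S \<noteq> 0" by blast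
  have "odd (fcard T) = q" using T(1) assms(3) unfolding par_def by blast
  moreover have "odd (fcard S + fcard T) = p" using T(2) assms(2) unfolding homog_def by blast
  ultimately show "odd (fcard S) = (q \<noteq> p)" by auto
qed

lemma homogI_par:
  assumes "\<And>T. par (odd (fcard T) \<noteq> p) (A (gmono T) :: 'k::field grass)"
  shows "homog p A"
  unfolding homog_def
proof (intro allI impI)
  fix T S assume "Poly_Mapping.lookup (A (gmono T)) S \<noteq> 0"
  then have "odd (fcard S) = (odd (fcard T) \<noteq> p)" using assms[of T] unfolding par_def by blast
  then show "odd (fcard S + fcard T) = p" by auto
qed

lemma homog_comp:
  assumes "op_linear A" "homog p A" "homog q B"
  shows "homog (p \<noteq> q) (\<lambda>f. A (B f) :: 'k::field grass)"
proof (rule homogI_par)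
  fix T
  have "par (odd (fcard T) \<noteq> q) (B (gmono T) :: 'k grass)"
  proof (unfold par_def, intro allI impI)
    fix S assume "Poly_Mapping.lookup (B (gmono T) :: 'k grass) S \<noteq> 0"
    then have "odd (fcard S + fcard T) = q" using assms(3) unfolding homog_def by blast
    then show "odd (fcard S) = (odd (fcard T) \<noteq> q)" by auto
  qed
  from homog_par[OF assms(1,2) this] have "par ((odd (fcard T) \<noteq> q) \<noteq> p) (A (B (gmono T)))" .
  moreover have "((odd (fcard T) \<noteq> q) \<noteq> p) = (odd (fcard T) \<noteq> (p \<noteq> q))" by auto
  ultimately show "par (odd (fcard T) \<noteq> (p \<noteq> q)) (A (B (gmono T)))" by simp
qed

lemma homog_plus: "homog p A \<Longrightarrow> homog p B \<Longrightarrow> homog p (\<lambda>f. A f + B f :: 'k::field grass)"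
  unfolding homog_def
proof (intro allI impI)
  fix T S assume a: "\<forall>T S. poly_mapping.lookup (A (gmono T)) S \<noteq> 0 \<longrightarrow> odd (fcard S + fcard T) = p"
    "\<forall>T S. poly_mapping.lookup (B (gmono T)) S \<noteq> 0 \<longrightarrow> odd (fcard S + fcard T) = p"
    and "poly_mapping.lookup (A (gmono T) + B (gmono T)) S \<noteq> 0"
  then have "poly_mapping.lookup (A (gmono T)) S \<noteq> 0 \<or> poly_mapping.lookup (B (gmono T)) S \<noteq> 0"
    by (auto simp: lookup_add)
  then show "odd (fcard S + fcard T) = p" using a by blast
qed
lemma homog_sm: "homog p A \<Longrightarrow> homog p (\<lambda>f. gsmult c (A f) :: 'k::field grass)"
  unfolding homog_def by simp
lemma homog_uminus: "homog p A \<Longrightarrow> homog p (\<lambda>f. - A f :: 'k::field grass)"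
  unfolding homog_def by simp
lemma homog_minus: "homog p A \<Longrightarrow> homog p B \<Longrightarrow> homog p (\<lambda>f. A f - B f :: 'k::field grass)"
  unfolding homog_def
proof (intro allI impI)
  fix T S assume a: "\<forall>T S. poly_mapping.lookup (A (gmono T)) S \<noteq> 0 \<longrightarrow> odd (fcard S + fcard T) = p"
    "\<forall>T S. poly_mapping.lookup (B (gmono T)) S \<noteq> 0 \<longrightarrow> odd (fcard S + fcard T) = p"
    and "poly_mapping.lookup (A (gmono T) - B (gmono T)) S \<noteq> 0"
  then have "poly_mapping.lookup (A (gmono T)) S \<noteq> 0 \<or> poly_mapping.lookup (B (gmono T)) S \<noteq> 0"
    by (auto simp: lookup_minus)
  then show "odd (fcard S + fcard T) = p" using a by blast
qed
lemma homog_zeroop: "homog p (\<lambda>f. 0 :: 'k::field grass)"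
  unfolding homog_def by simp
lemma homog_sumop: "(\<And>i. i \<in> K \<Longrightarrow> homog p (A i)) \<Longrightarrow> homog p (\<lambda>f. \<Sum>i\<in>K. A i f :: 'k::field grass)"
proof (induction K rule: infinite_finite_induct)
  case (infinite K) then show ?case by (simp add: homog_zeroop)
next
  case empty then show ?case by (simp add: homog_zeroop)
next
  case (insert x F)
  then show ?case by (simp add: homog_plus)
qed

lemma homog_both:
  assumes "op_linear A" "homog True A" "homog False A"
  shows "A = (\<lambda>f. 0 :: 'k::field grass)"
proof -
  have "\<And>T. A (gmono T) = (0::'k grass)"
  proof (rule poly_mapping_eqI)
    fix T S show "Poly_Mapping.lookup (A (gmono T)) S = Poly_Mapping.lookup (0::'k grass) S"
    proof (rule ccontr)
      assume "Poly_Mapping.lookup (A (gmono T)) S \<noteq> Poly_Mapping.lookup (0::'k grass) S"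
      then have n: "Poly_Mapping.lookup (A (gmono T)) S \<noteq> 0" by simp
      have "odd (fcard S + fcard T) = True" using n assms(2) unfolding homog_def by blast
      moreover have "odd (fcard S + fcard T) = False" using n assms(3) unfolding homog_def by blast
      ultimately show False by simp
    qed
  qed
  then show ?thesis using lin_eqI[OF assms(1) lin_zeroop] by blast
qed

lemma homog_xop: "homog True (xop j :: 'k::field gop)"
proof (rule homogI_par)
  fix T show "par (odd (fcard T) \<noteq> True) (xop j (gmono T) :: 'k grass)"
    using par_xop[OF par_mono, of T j] by simp
qed
lemma homog_dop: "homog True (dop j :: 'k::field gop)"
proof (rule homogI_par)
  fix T show "par (odd (fcard T) \<noteq> True) (dop j (gmono T) :: 'k grass)"
    using par_dop[OF par_mono, of T j] by simp
qed

lemma sbr_apply: "sbr p q A B f = A (B f) + gsmult (if p \<and> q then 1 else -1) (B (A (f::'k::field grass)))"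
  unfolding sbr_def op_add_def op_smult_def by simp

lemma op_add_apply: "op_add A B f = A f + B f" unfolding op_add_def by simp
lemma op_smult_apply: "op_smult c A f = gsmult c (A f)" unfolding op_smult_def by simp
lemma op_zero_apply: "op_zero f = 0" unfolding op_zero_def by simp

lemma lin_sbr: "op_linear A \<Longrightarrow> op_linear B \<Longrightarrow> op_linear (sbr p q A (B :: 'k::field gop))"
  unfolding sbr_def op_add_def op_smult_def o_def
  by (rule lin_plus[OF lin_comp lin_sm[OF lin_comp]])

lemma homog_sbr: "op_linear A \<Longrightarrow> op_linear B \<Longrightarrow> homog p A \<Longrightarrow> homog q B \<Longrightarrow>
   homog (p \<noteq> q) (sbr p q A (B :: 'k::field gop))"
proof -
  assume a: "op_linear A" "op_linear B" "homog p A" "homog q B"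
  have 1: "homog (p \<noteq> q) (\<lambda>f. A (B f))" by (rule homog_comp[OF a(1,3,4)])
  have "homog (q \<noteq> p) (\<lambda>f. B (A f))" by (rule homog_comp[OF a(2,4,3)])
  moreover have "(q \<noteq> p) = (p \<noteq> q)" by auto
  ultimately have 2: "homog (p \<noteq> q) (\<lambda>f. B (A f))" by simp
  show ?thesis unfolding sbr_def op_add_def op_smult_def o_def
    by (rule homog_plus[OF 1 homog_sm[OF 2]])
qed

section \<open>The sets Ve, Vo, Wo\<close>

definition Ve :: "'k::field gop set" where
  "Ve = {B. op_linear B \<and> homog False B \<and> (\<forall>j<3. \<forall>f. B (xop j f) = xop j (B f))}"
definition Vo :: "'k::field gop set" where
  "Vo = {C. op_linear C \<and> homog True C \<and> (\<exists>c::nat \<Rightarrow> 'k. \<forall>j<3. \<forall>f. C (xop j f) = gsmult (c j) f - xop j (C f))}"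
definition Wo :: "'k::field gop set" where
  "Wo = {C. op_linear C \<and> homog True C \<and> (\<forall>j<3. \<forall>f. C (xop j f) = - xop j (C f))}"

definition Vp :: "bool \<Rightarrow> 'k::field gop set" where "Vp p = (if p then Vo else Ve)"
definition Wp :: "bool \<Rightarrow> 'k::field gop set" where "Wp p = (if p then Wo else Ve)"

lemma Wo_Vo: "Wo \<subseteq> Vo"
  unfolding Wo_def Vo_def by (auto intro!: exI[of _ "\<lambda>_. 0"])

lemma Wp_Vp: "Wp p \<subseteq> Vp p"
  unfolding Wp_def Vp_def using Wo_Vo by auto

lemma brk_V:
  assumes A: "A \<in> Vp p" and X: "X \<in> Vp q"
  shows "sbr p q A X \<in> Wp (p \<noteq> (q::bool))"
proof -
  have linA: "op_linear A" and hA: "homog p A" and linX: "op_linear X" and hX: "homog q X"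
    using A X unfolding Vp_def Ve_def Vo_def by (auto split: if_splits)
  have lin: "op_linear (sbr p q A X)" by (rule lin_sbr[OF linA linX])
  have hom: "homog (p \<noteq> q) (sbr p q A X)" by (rule homog_sbr[OF linA linX hA hX])
  show ?thesis
  proof (cases p; cases q)
    assume pq: "p" "q"
    obtain c where c: "\<forall>j<3. \<forall>f. A (xop j f) = gsmult (c j) f - xop j (A f)"
      using A pq unfolding Vp_def Vo_def by auto
    obtain d where d: "\<forall>j<3. \<forall>f. X (xop j f) = gsmult (d j) f - xop j (X f)"
      using X pq unfolding Vp_def Vo_def by auto
    have "\<forall>j<3. \<forall>f. sbr p q A X (xop j f) = xop j (sbr p q A X f)"
      using pq c d by (simp add: sbr_apply lin_diff[OF linA] lin_diff[OF linX] lin_smult[OF linA] lin_smult[OF linX] X_add)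
    then show ?thesis using pq lin hom unfolding Wp_def Ve_def by simp
  next
    assume pq: "p" "\<not> q"
    obtain c where c: "\<forall>j<3. \<forall>f. A (xop j f) = gsmult (c j) f - xop j (A f)"
      using A pq unfolding Vp_def Vo_def by auto
    have d: "\<forall>j<3. \<forall>f. X (xop j f) = xop j (X f)"
      using X pq unfolding Vp_def Ve_def by auto
    have "\<forall>j<3. \<forall>f. sbr p q A X (xop j f) = - xop j (sbr p q A X f)"
      using pq c d by (simp add: sbr_apply lin_diff[OF linA] lin_diff[OF linX] lin_smult[OF linA] lin_smult[OF linX] X_add X_neg X_diff)
    then show ?thesis using pq lin hom unfolding Wp_def Wo_def by simp
  next
    assume pq: "\<not> p" "q"
    have c: "\<forall>j<3. \<forall>f. A (xop j f) = xop j (A f)"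
      using A pq unfolding Vp_def Ve_def by auto
    obtain d where d: "\<forall>j<3. \<forall>f. X (xop j f) = gsmult (d j) f - xop j (X f)"
      using X pq unfolding Vp_def Vo_def by auto
    have "\<forall>j<3. \<forall>f. sbr p q A X (xop j f) = - xop j (sbr p q A X f)"
      using pq c d by (simp add: sbr_apply lin_diff[OF linA] lin_diff[OF linX] lin_smult[OF linA] lin_smult[OF linX] X_add X_neg X_diff)
    then show ?thesis using pq lin hom unfolding Wp_def Wo_def by simp
  next
    assume pq: "\<not> p" "\<not> q"
    have c: "\<forall>j<3. \<forall>f. A (xop j f) = xop j (A f)"
      using A pq unfolding Vp_def Ve_def by auto
    have d: "\<forall>j<3. \<forall>f. X (xop j f) = xop j (X f)"
      using X pq unfolding Vp_def Ve_def by auto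
    have "\<forall>j<3. \<forall>f. sbr p q A X (xop j f) = xop j (sbr p q A X f)"
      using pq c d by (simp add: sbr_apply X_add X_neg X_diff)
    then show ?thesis using pq lin hom unfolding Wp_def Ve_def by simp
  qed
qed

lemma sq_V:
  assumes A: "A \<in> Vo"
  shows "A \<circ> A \<in> Ve"
proof -
  have linA: "op_linear A" and hA: "homog True A"
    using A unfolding Vo_def by auto
  obtain c where c: "\<forall>j<3. \<forall>f. A (xop j f) = gsmult (c j) f - xop j (A f)"
    using A unfolding Vo_def by auto
  have "op_linear (\<lambda>f. A (A f))" by (rule lin_comp[OF linA linA])
  moreover have "homog False (\<lambda>f. A (A f))" using homog_comp[OF linA hA hA] by simp
  moreover have "\<forall>j<3. \<forall>f. A (A (xop j f)) = xop j (A (A f))"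
    using c by (simp add: lin_diff[OF linA] lin_smult[OF linA])
  ultimately show ?thesis unfolding Ve_def o_def by simp
qed

abbreviation "fam \<equiv> {L :: 'k::field gop set. lie_subsuper L \<and> pivot 0 \<in> L \<and> pivot 1 \<in> L \<and> pivot 2 \<in> L}"

lemma Q_min: "lie_subsuper L \<Longrightarrow> pivot 0 \<in> L \<Longrightarrow> pivot 1 \<in> L \<Longrightarrow> pivot 2 \<in> L \<Longrightarrow> Qalg \<subseteq> L"
  unfolding Qalg_def by blast

lemma Q_zero: "op_zero \<in> (Qalg :: 'k::field gop set)"
  unfolding Qalg_def lie_subsuper_def subspace_op_def by blast
lemma Q_add: "A \<in> Qalg \<Longrightarrow> B \<in> Qalg \<Longrightarrow> op_add A B \<in> (Qalg :: 'k::field gop set)"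
  unfolding Qalg_def lie_subsuper_def subspace_op_def by blast
lemma Q_smult: "A \<in> Qalg \<Longrightarrow> op_smult c A \<in> (Qalg :: 'k::field gop set)"
  unfolding Qalg_def lie_subsuper_def subspace_op_def by blast
lemma Q_sbr: "A \<in> Qalg \<Longrightarrow> B \<in> Qalg \<Longrightarrow> homog p A \<Longrightarrow> homog q B \<Longrightarrow> sbr p q A B \<in> (Qalg :: 'k::field gop set)"
  unfolding Qalg_def lie_subsuper_def by blast
lemma Q_sq: "(2::'k) = 0 \<Longrightarrow> A \<in> Qalg \<Longrightarrow> homog True A \<Longrightarrow> A \<circ> A \<in> (Qalg :: 'k::field gop set)"
  unfolding Qalg_def lie_subsuper_def by blast
lemma Q_piv: "i < 3 \<Longrightarrow> pivot i \<in> (Qalg :: 'k::field gop set)"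
proof -
  assume "i < 3"
  then have "i = 0 \<or> i = 1 \<or> i = 2" by auto
  then show ?thesis unfolding Qalg_def by blast
qed

lemma op_add_zero[simp]: "op_add A op_zero = A" "op_add op_zero A = A"
  unfolding op_add_def op_zero_def by simp_all

lemma lin_op_zero: "op_linear (op_zero :: 'k::field gop)"
  unfolding op_zero_def by (rule lin_zeroop)
lemma homog_op_zero: "homog p (op_zero :: 'k::field gop)"
  unfolding op_zero_def by (rule homog_zeroop)

lemma Ve_zero: "op_zero \<in> Ve" and Vo_zero: "op_zero \<in> Vo" and Wo_zero: "op_zero \<in> Wo"
  unfolding Ve_def Vo_def Wo_def by (auto simp: lin_op_zero homog_op_zero op_zero_apply intro!: exI[of _ "\<lambda>_. 0"])

lemma Ve_add: "A \<in> Ve \<Longrightarrow> B \<in> Ve \<Longrightarrow> op_add A B \<in> Ve"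
proof -
  assume "A \<in> Ve" "B \<in> Ve"
  then have a: "op_linear A" "homog False A" "\<forall>j<3. \<forall>f. A (xop j f) = xop j (A f)"
    "op_linear B" "homog False B" "\<forall>j<3. \<forall>f. B (xop j f) = xop j (B f)" unfolding Ve_def by auto
  have "op_linear (\<lambda>f. A f + B f)" by (rule lin_plus[OF a(1,4)])
  moreover have "homog False (\<lambda>f. A f + B f)" by (rule homog_plus[OF a(2,5)])
  moreover have "\<forall>j<3. \<forall>f. A (xop j f) + B (xop j f) = xop j (A f + B f)" using a(3,6) by (simp add: X_add)
  ultimately show ?thesis unfolding Ve_def op_add_def by simp
qed
lemma Wo_add: "A \<in> Wo \<Longrightarrow> B \<in> Wo \<Longrightarrow> op_add A B \<in> Wo"
proof -
  assume "A \<in> Wo" "B \<in> Wo"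
  then have a: "op_linear A" "homog True A" "\<forall>j<3. \<forall>f. A (xop j f) = - xop j (A f)"
    "op_linear B" "homog True B" "\<forall>j<3. \<forall>f. B (xop j f) = - xop j (B f)" unfolding Wo_def by auto
  have "op_linear (\<lambda>f. A f + B f)" by (rule lin_plus[OF a(1,4)])
  moreover have "homog True (\<lambda>f. A f + B f)" by (rule homog_plus[OF a(2,5)])
  moreover have "\<forall>j<3. \<forall>f. A (xop j f) + B (xop j f) = - xop j (A f + B f)" using a(3,6) by (simp add: X_add)
  ultimately show ?thesis unfolding Wo_def op_add_def by simp
qed
lemma Vo_add: "A \<in> Vo \<Longrightarrow> B \<in> Vo \<Longrightarrow> op_add A B \<in> Vo"
proof -
  assume a: "A \<in> Vo" "B \<in> Vo"
  obtain c where c: "\<forall>j<3. \<forall>f. A (xop j f) = gsmult (c j) f - xop j (A f)" using a unfolding Vo_def by auto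
  obtain d where d: "\<forall>j<3. \<forall>f. B (xop j f) = gsmult (d j) f - xop j (B f)" using a unfolding Vo_def by auto
  have h1: "\<forall>j<3. \<forall>f. A (xop j f) + B (xop j f) = gsmult (c j + d j) f - xop j (A f + B f)"
    using c d by (simp add: X_add gsmult_add2)
  have h2: "op_linear (\<lambda>f. A f + B f)" using a unfolding Vo_def by (intro lin_plus) auto
  have h3: "homog True (\<lambda>f. A f + B f)" using a unfolding Vo_def by (intro homog_plus) auto
  show ?thesis unfolding Vo_def op_add_def mem_Collect_eq
    by (intro conjI h2 h3 exI[of _ "\<lambda>j. c j + d j"] h1)
qed

lemma Ve_sm: "A \<in> Ve \<Longrightarrow> op_smult c A \<in> Ve"
proof -
  assume "A \<in> Ve"
  then have a: "op_linear A" "homog False A" "\<forall>j<3. \<forall>f. A (xop j f) = xop j (A f)" unfolding Ve_def by auto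
  have "op_linear (\<lambda>f. gsmult c (A f))" by (rule lin_sm[OF a(1)])
  moreover have "homog False (\<lambda>f. gsmult c (A f))" by (rule homog_sm[OF a(2)])
  moreover have "\<forall>j<3. \<forall>f. gsmult c (A (xop j f)) = xop j (gsmult c (A f))" using a(3) by (simp add: xop_sm)
  ultimately show ?thesis unfolding Ve_def op_smult_def by simp
qed
lemma Wo_sm: "A \<in> Wo \<Longrightarrow> op_smult c A \<in> Wo"
proof -
  assume "A \<in> Wo"
  then have a: "op_linear A" "homog True A" "\<forall>j<3. \<forall>f. A (xop j f) = - xop j (A f)" unfolding Wo_def by auto
  have "op_linear (\<lambda>f. gsmult c (A f))" by (rule lin_sm[OF a(1)])
  moreover have "homog True (\<lambda>f. gsmult c (A f))" by (rule homog_sm[OF a(2)])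
  moreover have "\<forall>j<3. \<forall>f. gsmult c (A (xop j f)) = - xop j (gsmult c (A f))" using a(3) by (simp add: xop_sm gsmult_neg)
  ultimately show ?thesis unfolding Wo_def op_smult_def by simp
qed
lemma Vo_sm: "A \<in> Vo \<Longrightarrow> op_smult e A \<in> Vo"
proof -
  assume a: "A \<in> Vo"
  obtain c where c: "\<forall>j<3. \<forall>f. A (xop j f) = gsmult (c j) f - xop j (A f)" using a unfolding Vo_def by auto
  have h1: "\<forall>j<3. \<forall>f. gsmult e (A (xop j f)) = gsmult (e * c j) f - xop j (gsmult e (A f))"
    using c by (simp add: gsmult_diff xop_sm)
  have h2: "op_linear (\<lambda>f. gsmult e (A f))" using a unfolding Vo_def by (intro lin_sm) auto
  have h3: "homog True (\<lambda>f. gsmult e (A f))" using a unfolding Vo_def by (intro homog_sm) auto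
  show ?thesis unfolding Vo_def op_smult_def mem_Collect_eq
    by (intro conjI h2 h3 exI[of _ "\<lambda>j. e * c j"] h1)
qed

lemma decomp:
  assumes "op_linear B" "op_linear C" "homog False B" "homog True C" "homog p (op_add B C)"
  shows "op_add B C = (if p then C else (B :: 'k::field gop))"
proof (cases p)
  case True
  have e: "B = (\<lambda>f. op_add B C f - C f)" by (simp add: op_add_def)
  have h: "homog True (op_add B C)" using assms(5) True by simp
  have "homog True B" by (subst e) (rule homog_minus[OF h assms(4)])
  then have "B = (\<lambda>f. 0)" using assms(1,3) homog_both by blast
  then show ?thesis using True by (simp add: op_add_def)
next
  case False
  have e: "C = (\<lambda>f. op_add B C f - B f)" by (simp add: op_add_def)
  have h: "homog False (op_add B C)" using assms(5) False by simp
  have "homog False C" by (subst e) (rule homog_minus[OF h assms(3)])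
  then have "C = (\<lambda>f. 0)" using assms(2,4) homog_both by blast
  then show ?thesis using False by (simp add: op_add_def)
qed

definition Uset :: "'k::field gop set" where
  "Uset = {op_add B C | B C. B \<in> Qalg \<inter> Ve \<and> C \<in> Qalg \<inter> Vo}"

lemma U_decomp:
  assumes "A \<in> Uset" "homog p A"
  shows "A \<in> Qalg \<inter> Vp p"
proof -
  obtain B C where A: "A = op_add B C" "B \<in> Qalg \<inter> Ve" "C \<in> Qalg \<inter> Vo"
    using assms(1) unfolding Uset_def by blast
  have "op_linear B" "homog False B" "op_linear C" "homog True C" using A unfolding Ve_def Vo_def by auto
  then have "A = (if p then C else B)" using decomp assms(2) A(1) by blast
  then show ?thesis using A unfolding Vp_def by auto
qed

lemma U_in_Ve: "B \<in> Qalg \<inter> Ve \<Longrightarrow> B \<in> Uset"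
  unfolding Uset_def using Q_zero Vo_zero by (metis (mono_tags, lifting) IntI mem_Collect_eq op_add_zero(1))
lemma U_in_Vo: "C \<in> Qalg \<inter> Vo \<Longrightarrow> C \<in> Uset"
  unfolding Uset_def using Q_zero Ve_zero by (metis (mono_tags, lifting) IntI mem_Collect_eq op_add_zero(2))
lemma U_in_Vp: "A \<in> Qalg \<inter> Vp p \<Longrightarrow> A \<in> Uset"
  unfolding Vp_def using U_in_Ve U_in_Vo by (cases p) auto

lemma pivot_Vo: "i < 3 \<Longrightarrow> pivot i \<in> (Vo :: 'k::field gop set)"
proof -
  assume i: "i < 3"
  have h1: "\<forall>j<3. \<forall>f. pivot i (xop j f) = gsmult (if j = i then 1 else 0) f - xop j (pivot i (f :: 'k grass))"
  proof (intro allI impI)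
    fix j :: nat and f :: "'k grass" assume "j < 3"
    then have "j < i + 3" by simp
    then show "pivot i (xop j f) = gsmult (if j = i then 1 else 0) f - xop j (pivot i f)"
      by (cases "j = i") (simp_all add: piv_x)
  qed
  show ?thesis unfolding Vo_def mem_Collect_eq
    by (intro conjI lin_pivot homog_pivot exI[of _ "\<lambda>j. if j = i then 1 else 0"] h1)
qed

lemma U_lie: "lie_subsuper (Uset :: 'k::field gop set)"
  unfolding lie_subsuper_def
proof (intro conjI)
  show "subspace_op (Uset :: 'k gop set)"
    unfolding subspace_op_def
  proof (intro conjI ballI allI)
    fix A :: "'k gop" assume "A \<in> Uset"
    then show "op_linear A" unfolding Uset_def Ve_def Vo_def op_add_def by (auto intro: lin_plus)
  next
    show "op_zero \<in> (Uset :: 'k gop set)" using U_in_Ve[OF IntI[OF Q_zero Ve_zero]] .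
  next
    fix A B :: "'k gop" assume "A \<in> Uset" "B \<in> Uset"
    then obtain B1 C1 B2 C2 where a: "A = op_add B1 C1" "B1 \<in> Qalg \<inter> Ve" "C1 \<in> Qalg \<inter> Vo"
      "B = op_add B2 C2" "B2 \<in> Qalg \<inter> Ve" "C2 \<in> Qalg \<inter> Vo" unfolding Uset_def by blast
    have "op_add A B = op_add (op_add B1 B2) (op_add C1 C2)"
      unfolding a op_add_def by (simp add: algebra_simps)
    moreover have "op_add B1 B2 \<in> Qalg \<inter> Ve" "op_add C1 C2 \<in> Qalg \<inter> Vo"
      using a by (auto intro: Q_add Ve_add Vo_add)
    ultimately show "op_add A B \<in> Uset" unfolding Uset_def by blast
  next
    fix c and A :: "'k gop" assume "A \<in> Uset"
    then obtain B1 C1 where a: "A = op_add B1 C1" "B1 \<in> Qalg \<inter> Ve" "C1 \<in> Qalg \<inter> Vo"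
      unfolding Uset_def by blast
    have "op_smult c A = op_add (op_smult c B1) (op_smult c C1)"
      unfolding a op_add_def op_smult_def by (simp add: gsmult_add)
    moreover have "op_smult c B1 \<in> Qalg \<inter> Ve" "op_smult c C1 \<in> Qalg \<inter> Vo"
      using a by (auto intro: Q_smult Ve_sm Vo_sm)
    ultimately show "op_smult c A \<in> Uset" unfolding Uset_def by blast
  qed
next
  show "graded (Uset :: 'k gop set)"
    unfolding graded_def
  proof
    fix A :: "'k gop" assume "A \<in> Uset"
    then obtain B1 C1 where a: "A = op_add B1 C1" "B1 \<in> Qalg \<inter> Ve" "C1 \<in> Qalg \<inter> Vo"
      unfolding Uset_def by blast
    have "homog False B1" "homog True C1" using a unfolding Ve_def Vo_def by auto
    then show "\<exists>B\<in>Uset. \<exists>C\<in>Uset. homog False B \<and> homog True C \<and> A = op_add B C"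
      using a U_in_Ve U_in_Vo by blast
  qed
next
  show "\<forall>A\<in>(Uset :: 'k gop set). \<forall>B\<in>Uset. \<forall>p q. homog p A \<longrightarrow> homog q B \<longrightarrow> sbr p q A B \<in> Uset"
  proof (intro ballI allI impI)
    fix A B :: "'k gop" and p q assume a: "A \<in> Uset" "B \<in> Uset" "homog p A" "homog q B"
    have A: "A \<in> Qalg \<inter> Vp p" and B: "B \<in> Qalg \<inter> Vp q" using U_decomp a by blast+
    have "sbr p q A B \<in> Qalg" using A B a Q_sbr by blast
    moreover have "sbr p q A B \<in> Vp (p \<noteq> q)" using brk_V[of A p B q] A B Wp_Vp by blast
    ultimately show "sbr p q A B \<in> Uset" using U_in_Vp by blast
  qed
next
  show "(2::'k) = 0 \<longrightarrow> (\<forall>A\<in>(Uset :: 'k gop set). homog True A \<longrightarrow> A \<circ> A \<in> Uset)"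
  proof (intro impI ballI)
    fix A :: "'k gop" assume a: "(2::'k) = 0" "A \<in> Uset" "homog True A"
    have A: "A \<in> Qalg \<inter> Vo" using U_decomp[OF a(2,3)] unfolding Vp_def by simp
    then have "A \<circ> A \<in> Qalg \<inter> Ve" using Q_sq[OF a(1)] a(3) sq_V by blast
    then show "A \<circ> A \<in> Uset" by (rule U_in_Ve)
  qed
qed

lemma Q_U: "(Qalg :: 'k::field gop set) \<subseteq> Uset"
  by (rule Q_min[OF U_lie]) (auto intro!: U_in_Vo Q_piv pivot_Vo)

lemma Q_V: "A \<in> Qalg \<Longrightarrow> homog p A \<Longrightarrow> A \<in> Vp (p::bool)"
  using Q_U U_decomp by blast

lemma Q_lin: "A \<in> Qalg \<Longrightarrow> op_linear (A :: 'k::field gop)"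
  using Q_U unfolding Uset_def Ve_def Vo_def op_add_def by (auto intro: lin_plus)

section \<open>The ideal J\<close>

definition Jset :: "'k::field gop set" where
  "Jset = {op_add B C | B C. B \<in> Qalg \<inter> Ve \<and> C \<in> Qalg \<inter> Wo}"

lemma J_decomp:
  assumes "A \<in> Jset" "homog p A"
  shows "A \<in> Qalg \<inter> Wp p"
proof -
  obtain B C where A: "A = op_add B C" "B \<in> Qalg \<inter> Ve" "C \<in> Qalg \<inter> Wo"
    using assms(1) unfolding Jset_def by blast
  have "op_linear B" "homog False B" "op_linear C" "homog True C" using A unfolding Ve_def Wo_def by auto
  then have "A = (if p then C else B)" using decomp assms(2) A(1) by blast
  then show ?thesis using A unfolding Wp_def by auto
qed

lemma J_in_Ve: "B \<in> Qalg \<inter> Ve \<Longrightarrow> B \<in> Jset"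
  unfolding Jset_def using Q_zero Wo_zero by (metis (mono_tags, lifting) IntI mem_Collect_eq op_add_zero(1))
lemma J_in_Wo: "C \<in> Qalg \<inter> Wo \<Longrightarrow> C \<in> Jset"
  unfolding Jset_def using Q_zero Ve_zero by (metis (mono_tags, lifting) IntI mem_Collect_eq op_add_zero(2))
lemma J_in_Wp: "A \<in> Qalg \<inter> Wp p \<Longrightarrow> A \<in> Jset"
  unfolding Wp_def using J_in_Ve J_in_Wo by (cases p) auto

lemma J_sub: "Jset \<subseteq> (Qalg :: 'k::field gop set)"
  unfolding Jset_def using Q_add by blast

lemma J_lin: "A \<in> Jset \<Longrightarrow> op_linear (A :: 'k::field gop)"
  using J_sub Q_lin by blast

lemma J_zero: "op_zero \<in> (Jset :: 'k::field gop set)"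
  using J_in_Ve[OF IntI[OF Q_zero Ve_zero]] .

lemma J_add: "A \<in> Jset \<Longrightarrow> B \<in> Jset \<Longrightarrow> op_add A B \<in> (Jset :: 'k::field gop set)"
proof -
  assume "A \<in> Jset" "B \<in> Jset"
  then obtain B1 C1 B2 C2 where a: "A = op_add B1 C1" "B1 \<in> Qalg \<inter> Ve" "C1 \<in> Qalg \<inter> Wo"
    "B = op_add B2 C2" "B2 \<in> Qalg \<inter> Ve" "C2 \<in> Qalg \<inter> Wo" unfolding Jset_def by blast
  have "op_add A B = op_add (op_add B1 B2) (op_add C1 C2)"
    unfolding a op_add_def by (simp add: algebra_simps)
  moreover have "op_add B1 B2 \<in> Qalg \<inter> Ve" "op_add C1 C2 \<in> Qalg \<inter> Wo"
    using a by (auto intro: Q_add Ve_add Wo_add)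
  ultimately show "op_add A B \<in> Jset" unfolding Jset_def by blast
qed

lemma J_smult: "A \<in> Jset \<Longrightarrow> op_smult c A \<in> (Jset :: 'k::field gop set)"
proof -
  assume "A \<in> Jset"
  then obtain B1 C1 where a: "A = op_add B1 C1" "B1 \<in> Qalg \<inter> Ve" "C1 \<in> Qalg \<inter> Wo"
    unfolding Jset_def by blast
  have "op_smult c A = op_add (op_smult c B1) (op_smult c C1)"
    unfolding a op_add_def op_smult_def by (simp add: gsmult_add)
  moreover have "op_smult c B1 \<in> Qalg \<inter> Ve" "op_smult c C1 \<in> Qalg \<inter> Wo"
    using a by (auto intro: Q_smult Ve_sm Wo_sm)
  ultimately show "op_smult c A \<in> Jset" unfolding Jset_def by blast
qed

lemma J_sbr: "A \<in> Qalg \<Longrightarrow> X \<in> Qalg \<Longrightarrow> homog p A \<Longrightarrow> homog q X \<Longrightarrow> sbr p q A X \<in> (Jset :: 'k::field gop set)"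
proof -
  assume a: "A \<in> Qalg" "X \<in> Qalg" "homog p A" "homog q X"
  have "A \<in> Vp p" "X \<in> Vp q" using Q_V a by blast+
  then have "sbr p q A X \<in> Wp (p \<noteq> q)" by (rule brk_V)
  moreover have "sbr p q A X \<in> Qalg" using Q_sbr a by blast
  ultimately show ?thesis using J_in_Wp by blast
qed

lemma J_ideal: "is_ideal Qalg (Jset :: 'k::field gop set)"
  unfolding is_ideal_def
proof (intro conjI)
  show "Jset \<subseteq> (Qalg :: 'k gop set)" by (rule J_sub)
  show "subspace_op (Jset :: 'k gop set)"
    unfolding subspace_op_def using J_lin J_zero J_add J_smult by blast
  show "graded (Jset :: 'k gop set)"
    unfolding graded_def
  proof
    fix A :: "'k gop" assume "A \<in> Jset"
    then obtain B1 C1 where a: "A = op_add B1 C1" "B1 \<in> Qalg \<inter> Ve" "C1 \<in> Qalg \<inter> Wo"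
      unfolding Jset_def by blast
    have "homog False B1" "homog True C1" using a unfolding Ve_def Wo_def by auto
    then show "\<exists>B\<in>Jset. \<exists>C\<in>Jset. homog False B \<and> homog True C \<and> A = op_add B C"
      using a J_in_Ve J_in_Wo by blast
  qed
  show "\<forall>A\<in>(Qalg :: 'k gop set). \<forall>B\<in>Jset. \<forall>p q. homog p A \<longrightarrow> homog q B \<longrightarrow> sbr p q A B \<in> Jset"
    using J_sbr J_sub by blast
  show "(2::'k) = 0 \<longrightarrow> (\<forall>B\<in>(Jset :: 'k gop set). homog True B \<longrightarrow> B \<circ> B \<in> Jset)"
  proof (intro impI ballI)
    fix B :: "'k gop" assume a: "(2::'k) = 0" "B \<in> Jset" "homog True B"
    have B: "B \<in> Qalg \<inter> Wo" using J_decomp[OF a(2,3)] unfolding Wp_def by simp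
    then have "B \<circ> B \<in> Qalg \<inter> Ve" using Q_sq[OF a(1)] a(3) sq_V Wo_Vo by blast
    then show "B \<circ> B \<in> Jset" by (rule J_in_Ve)
  qed
qed

lemma J_fin: "fin_codim Qalg (Jset :: 'k::field gop set)"
  unfolding fin_codim_def
proof (intro exI conjI)
  let ?F = "pivot ` {..<3} :: 'k gop set"
  show "finite ?F" by simp
  show "?F \<subseteq> Qalg" using Q_piv by auto
  have inj: "inj_on (pivot :: nat \<Rightarrow> 'k gop) {..<3}"
  proof (rule inj_onI)
    fix i j assume "(pivot i :: 'k gop) = pivot j"
    then have "Poly_Mapping.lookup (pivot i (gmono {|i|}) :: 'k grass) {||} = Poly_Mapping.lookup (pivot j (gmono {|i|})) {||}"
      by simp
    then show "i = j" by (simp add: psi_pivot split: if_splits)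
  qed
  show "Qalg \<subseteq> {op_add B C | B C. B \<in> Jset \<and> C \<in> op_span ?F}"
  proof
    fix A :: "'k gop" assume "A \<in> Qalg"
    then have "A \<in> Uset" using Q_U by blast
    then obtain B C where a: "A = op_add B C" "B \<in> Qalg \<inter> Ve" "C \<in> Qalg \<inter> Vo"
      unfolding Uset_def by blast
    obtain c where c: "\<forall>j<3. \<forall>f. C (xop j f) = gsmult (c j) f - xop j (C f)" using a(3) unfolding Vo_def by auto
    define D where "D = (\<lambda>f. \<Sum>i<3. gsmult (c i) (pivot i f :: 'k grass))"
    define C' where "C' = (\<lambda>f. C f - D f)"
    have linC: "op_linear C" and hC: "homog True C" using a(3) unfolding Vo_def by auto
    have linD: "op_linear D" unfolding D_def by (intro lin_sumop lin_sm lin_pivot)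
    have hD: "homog True D" unfolding D_def by (intro homog_sumop homog_sm homog_pivot)
    have DQ: "D \<in> Qalg"
    proof -
      have "D = op_add (op_smult (c 0) (pivot 0)) (op_add (op_smult (c 1) (pivot 1)) (op_smult (c 2) (pivot 2)))"
        unfolding D_def op_add_def op_smult_def by (rule ext) (simp add: numeral_3_eq_3 numeral_2_eq_2 lessThan_Suc add.assoc)
      moreover have "pivot 0 \<in> Qalg" "pivot 1 \<in> Qalg" "pivot 2 \<in> Qalg" by (simp_all add: Q_piv)
      ultimately show ?thesis by (metis Q_add Q_smult)
    qed
    have C'Q: "C' \<in> Qalg"
    proof -
      have "C' = op_add C (op_smult (-1) D)" unfolding C'_def op_add_def op_smult_def by simp
      then show ?thesis using a(3) DQ by (auto intro: Q_add Q_smult)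
    qed
    have Dx: "D (xop j f) = gsmult (c j) f - xop j (D f)" if "j < 3" for j f
    proof -
      have "D (xop j f) = (\<Sum>i<3. gsmult (c i) ((if j = i then f else 0) - xop j (pivot i f)))"
        unfolding D_def using that by (intro sum.cong) (auto simp: piv_x)
      also have "\<dots> = (\<Sum>i<3. gsmult (if j = i then c i else 0) f) - (\<Sum>i<3. xop j (gsmult (c i) (pivot i f)))"
      proof -
        have "\<And>i. gsmult (c i) ((if j = i then f else 0) - xop j (pivot i f)) = gsmult (if j = i then c i else 0) f - xop j (gsmult (c i) (pivot i f))"
          by (case_tac "j = i") (simp_all add: gsmult_diff xop_sm gsmult_neg)
        then show ?thesis by (simp add: sum_subtractf)
      qed
      also have "(\<Sum>i<3. gsmult (if j = i then c i else 0) f) = gsmult (c j) f"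
      proof -
        have "(\<Sum>i<3. gsmult (if j = i then c i else 0) f) = (\<Sum>i<3. if i = j then gsmult (c j) f else 0)"
          by (rule sum.cong) auto
        then show ?thesis using that by simp
      qed
      also have "(\<Sum>i<3. xop j (gsmult (c i) (pivot i f))) = xop j (D f)"
        unfolding D_def by (simp add: lin_sum[OF lin_xop])
      finally show ?thesis by simp
    qed
    have C'W: "C' \<in> Wo"
    proof -
      have "op_linear C'" unfolding C'_def by (rule lin_minus[OF linC linD])
      moreover have "homog True C'" unfolding C'_def by (rule homog_minus[OF hC hD])
      moreover have "\<forall>j<3. \<forall>f. C' (xop j f) = - xop j (C' f)"
        unfolding C'_def using c Dx by (simp add: X_diff)
      ultimately show ?thesis unfolding Wo_def by blast
    qed
    have J: "op_add B C' \<in> Jset" unfolding Jset_def using a(2) C'Q C'W by blast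
    have S: "D \<in> op_span ?F"
      unfolding op_span_def
    proof (intro CollectI exI conjI)
      let ?c = "\<lambda>A. c (inv_into {..<3} pivot A)"
      show "finite ?F" by simp
      show "?F \<subseteq> ?F" by simp
      show "D = (\<lambda>f. \<Sum>A\<in>?F. gsmult (?c A) (A f))"
        unfolding D_def by (rule ext) (simp add: sum.reindex[OF inj] inv_into_f_f[OF inj])
    qed
    have "A = op_add (op_add B C') D"
      unfolding a(1) op_add_def C'_def by simp
    then show "A \<in> {op_add B C | B C. B \<in> Jset \<and> C \<in> op_span ?F}" using J S by blast
  qed
qed

lemma wop_eq: "sbr True True (pivot n) (pivot (Suc n)) = (\<lambda>f. - xop n (pivot (n+3) (f::'k::field grass)))"
  by (rule ext) (simp add: sbr_apply brk_b)

lemma homog_xv: "homog False (\<lambda>f. xop n (pivot m (f::'k::field grass)))"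
  using homog_comp[OF lin_xop homog_xop homog_pivot] by simp

lemma pivot_Q: "pivot n \<in> (Qalg :: 'k::field gop set)"
proof (induction n rule: less_induct)
  case (less n)
  show ?case
  proof (cases "n < 3")
    case True then show ?thesis by (rule Q_piv)
  next
    case False
    define m where "m = n - 3"
    have n: "n = m + 3" using False m_def by simp
    have a: "pivot m \<in> (Qalg :: 'k gop set)" "pivot (Suc m) \<in> (Qalg :: 'k gop set)" using less n by simp_all
    have "sbr True True (pivot m) (pivot (Suc m)) \<in> (Qalg :: 'k gop set)"
      using Q_sbr[OF a homog_pivot homog_pivot] .
    then have "op_smult (-1) (\<lambda>f. - xop m (pivot (m+3) (f::'k grass))) \<in> Qalg"
      unfolding wop_eq by (rule Q_smult)
    moreover have "op_smult (-1) (\<lambda>f. - xop m (pivot (m+3) (f::'k grass))) = (\<lambda>f. xop m (pivot (m+3) f))"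
      unfolding op_smult_def by simp
    ultimately have b: "(\<lambda>f. xop m (pivot (m+3) (f::'k grass))) \<in> Qalg" by simp
    have "sbr True False (pivot m) (\<lambda>f. xop m (pivot (m+3) (f::'k grass))) \<in> Qalg"
      by (rule Q_sbr[OF a(1) b homog_pivot homog_xv])
    moreover have "sbr True False (pivot m) (\<lambda>f. xop m (pivot (m+3) (f::'k grass))) = pivot (m+3)"
    proof (rule ext)
      fix f :: "'k grass"
      show "sbr True False (pivot m) (\<lambda>f. xop m (pivot (m+3) f)) f = pivot (m+3) f"
        using brk_c[of m f] by (simp add: sbr_apply)
    qed
    ultimately show ?thesis using n by simp
  qed
qed

lemma pivot_Wo: "3 \<le> n \<Longrightarrow> pivot n \<in> (Wo :: 'k::field gop set)"
proof -
  assume n: "3 \<le> n"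
  have "\<forall>j<3. \<forall>f. pivot n (xop j f) = - xop j (pivot n (f::'k grass))"
    using n by (auto intro!: piv_x_ne)
  then show ?thesis unfolding Wo_def using lin_pivot homog_pivot by blast
qed

lemma pivot_J: "3 \<le> n \<Longrightarrow> pivot n \<in> (Jset :: 'k::field gop set)"
  using J_in_Wo pivot_Q pivot_Wo by blast

definition inR :: "'k::field grass \<Rightarrow> bool" where
  "inR g \<longleftrightarrow> (\<forall>S. Poly_Mapping.lookup g S \<noteq> 0 \<longrightarrow> 0 |\<in>| S \<and> 1 |\<in>| S \<and> 2 |\<in>| S)"

lemma inR_add: "inR f \<Longrightarrow> inR g \<Longrightarrow> inR (f + g)"
  unfolding inR_def by (metis add.right_neutral add_0 lookup_add)
lemma inR_sm: "inR f \<Longrightarrow> inR (gsmult c f)"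
  unfolding inR_def by simp
lemma inR_zero: "inR 0"
  unfolding inR_def by simp
lemma inR_empty: "inR g \<Longrightarrow> Poly_Mapping.lookup g {||} = 0"
  unfolding inR_def by auto

lemma inR_x: "inR (xop 0 (xop 1 (xop 2 (h::'k::field grass))))"
  unfolding inR_def
proof (intro allI impI)
  fix S assume "Poly_Mapping.lookup (xop 0 (xop 1 (xop 2 h))) S \<noteq> 0"
  then obtain T1 where 1: "Poly_Mapping.lookup (xop 1 (xop 2 h)) T1 \<noteq> 0" "S = finsert 0 T1"
    using xop_supp by blast
  then obtain T2 where 2: "Poly_Mapping.lookup (xop 2 h) T2 \<noteq> 0" "T1 = finsert 1 T2"
    using xop_supp by blast
  have "2 |\<in>| T2" using 2(1) by (rule xop_in)
  then show "0 |\<in>| S \<and> 1 |\<in>| S \<and> 2 |\<in>| S" using 1 2 by simp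
qed

lemma xd_id:
  assumes "\<forall>S. Poly_Mapping.lookup g S \<noteq> 0 \<longrightarrow> j |\<in>| S"
  shows "xop j (dop j g) = (g::'k::field grass)"
proof -
  have L: "op_linear (\<lambda>f. xop j (dop j (f::'k grass)))" by (rule lin_comp[OF lin_xop lin_dop])
  have "xop j (dop j g) = (\<Sum>T\<in>Poly_Mapping.keys g. gsmult (Poly_Mapping.lookup g T) (xop j (dop j (gmono T))))"
    using lin_expand[OF L, of g] by simp
  also have "\<dots> = (\<Sum>T\<in>Poly_Mapping.keys g. gsmult (Poly_Mapping.lookup g T) (gmono T))"
  proof (rule sum.cong[OF refl])
    fix T assume "T \<in> Poly_Mapping.keys g"
    then have jT: "j |\<in>| T" using assms by (auto simp: in_keys_iff)
    have e: "finsert j (T |-| {|j|}) = T" using jT by auto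
    have "xop j (dop j (gmono T)) = xop j (gsmult (gsign j T) (gmono (T |-| {|j|})) :: 'k grass)"
      using jT by (simp add: dop_mono)
    also have "\<dots> = gsmult (gsign j T) (gsmult (gsign j (T |-| {|j|})) (gmono (finsert j (T |-| {|j|}))))"
      by (simp add: xop_sm xop_mono)
    also have "\<dots> = gmono T" unfolding e by simp
    finally have "xop j (dop j (gmono T)) = (gmono T :: 'k grass)" .
    then show "gsmult (Poly_Mapping.lookup g T) (xop j (dop j (gmono T))) = gsmult (Poly_Mapping.lookup g T) (gmono T)"
      by simp
  qed
  also have "\<dots> = g" by (rule grass_expand[symmetric])
  finally show ?thesis .
qed

lemma dop_keep:
  assumes "\<forall>S. Poly_Mapping.lookup g S \<noteq> 0 \<longrightarrow> i |\<in>| S" "i \<noteq> j"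
  shows "\<forall>S. Poly_Mapping.lookup (dop j (g::'k::field grass)) S \<noteq> 0 \<longrightarrow> i |\<in>| S"
proof (intro allI impI)
  fix S assume "Poly_Mapping.lookup (dop j g) S \<noteq> 0"
  then obtain T where "Poly_Mapping.lookup g T \<noteq> 0" "S = T |-| {|j|}" using dop_supp by blast
  then show "i |\<in>| S" using assms by auto
qed

lemma inR_repr: "inR g \<Longrightarrow> \<exists>h. g = xop 0 (xop 1 (xop 2 (h::'k::field grass)))"
proof -
  assume "inR g"
  then have a0: "\<forall>S. Poly_Mapping.lookup g S \<noteq> 0 \<longrightarrow> 0 |\<in>| S"
    and a1: "\<forall>S. Poly_Mapping.lookup g S \<noteq> 0 \<longrightarrow> 1 |\<in>| S"
    and a2: "\<forall>S. Poly_Mapping.lookup g S \<noteq> 0 \<longrightarrow> 2 |\<in>| S" unfolding inR_def by auto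
  define g1 where "g1 = dop 0 g"
  define g2 where "g2 = dop 1 g1"
  have b1: "\<forall>S. Poly_Mapping.lookup g1 S \<noteq> 0 \<longrightarrow> 1 |\<in>| S" unfolding g1_def by (rule dop_keep[OF a1]) simp
  have b2: "\<forall>S. Poly_Mapping.lookup g1 S \<noteq> 0 \<longrightarrow> 2 |\<in>| S" unfolding g1_def by (rule dop_keep[OF a2]) simp
  have c2: "\<forall>S. Poly_Mapping.lookup g2 S \<noteq> 0 \<longrightarrow> 2 |\<in>| S" unfolding g2_def by (rule dop_keep[OF b2]) simp
  have "g = xop 0 g1" unfolding g1_def by (rule xd_id[OF a0, symmetric])
  also have "g1 = xop 1 g2" unfolding g2_def by (rule xd_id[OF b1, symmetric])
  also have "g2 = xop 2 (dop 2 g2)" by (rule xd_id[OF c2, symmetric])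
  finally show ?thesis by blast
qed

lemma inR_Ve: "A \<in> Ve \<Longrightarrow> inR g \<Longrightarrow> inR (A g)"
proof -
  assume A: "A \<in> Ve" and g: "inR g"
  then have c: "\<forall>j<3. \<forall>f. A (xop j f) = xop j (A f)" unfolding Ve_def by auto
  obtain h where h: "g = xop 0 (xop 1 (xop 2 h))" using inR_repr[OF g] by blast
  have e: "A g = xop 0 (xop 1 (xop 2 (A h)))" unfolding h using c by simp
  show ?thesis unfolding e by (rule inR_x)
qed

lemma inR_Wo: "A \<in> Wo \<Longrightarrow> inR g \<Longrightarrow> inR (A g)"
proof -
  assume A: "A \<in> Wo" and g: "inR g"
  then have c: "\<forall>j<3. \<forall>f. A (xop j f) = - xop j (A f)" unfolding Wo_def by auto
  obtain h where h: "g = xop 0 (xop 1 (xop 2 h))" using inR_repr[OF g] by blast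
  have e: "A g = xop 0 (xop 1 (xop 2 (- A h)))" unfolding h using c by (simp add: X_neg)
  show ?thesis unfolding e by (rule inR_x)
qed

lemma inR_Wp: "A \<in> Wp p \<Longrightarrow> inR g \<Longrightarrow> inR (A g)"
  unfolding Wp_def using inR_Ve inR_Wo by (cases p) auto

lemma part_inR:
  assumes "op_linear B" "homog p B" "homog (\<not> p) C" "\<forall>f. inR (B f + C f)"
  shows "inR (B (f::'k::field grass))"
  unfolding inR_def
proof (intro allI impI)
  fix S assume "Poly_Mapping.lookup (B f) S \<noteq> 0"
  from supp_lin[OF assms(1), where P="\<lambda>T S. Poly_Mapping.lookup (B (gmono T)) S \<noteq> 0", OF _ this]
  obtain T where T: "Poly_Mapping.lookup (B (gmono T)) S \<noteq> 0" by blast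
  have "Poly_Mapping.lookup (C (gmono T)) S = 0"
  proof (rule ccontr)
    assume "Poly_Mapping.lookup (C (gmono T)) S \<noteq> 0"
    then have "odd (fcard S + fcard T) = (\<not> p)" using assms(3) unfolding homog_def by blast
    moreover have "odd (fcard S + fcard T) = p" using T assms(2) unfolding homog_def by blast
    ultimately show False by simp
  qed
  then have "Poly_Mapping.lookup (B (gmono T) + C (gmono T)) S \<noteq> 0" using T by (simp add: lookup_add)
  then show "0 |\<in>| S \<and> 1 |\<in>| S \<and> 2 |\<in>| S" using assms(4) unfolding inR_def by blast
qed

section \<open>The ideal I\<close>

definition Iset :: "'k::field gop set" where
  "Iset = {A \<in> Jset. \<forall>f. inR (A f)}"

lemma I_ideal: "is_ideal Jset (Iset :: 'k::field gop set)"
  unfolding is_ideal_def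
proof (intro conjI)
  show "Iset \<subseteq> (Jset :: 'k gop set)" unfolding Iset_def by blast
  show "subspace_op (Iset :: 'k gop set)"
    unfolding subspace_op_def Iset_def
    using J_lin J_zero J_add J_smult by (auto simp: op_zero_apply op_add_apply op_smult_apply inR_zero inR_add inR_sm)
  show "graded (Iset :: 'k gop set)"
    unfolding graded_def
  proof
    fix A :: "'k gop" assume A: "A \<in> Iset"
    then have AJ: "A \<in> Jset" and AR: "\<forall>f. inR (A f)" unfolding Iset_def by auto
    then obtain B1 C1 where a: "A = op_add B1 C1" "B1 \<in> Qalg \<inter> Ve" "C1 \<in> Qalg \<inter> Wo"
      unfolding Jset_def by blast
    have h: "homog False B1" "homog True C1" "op_linear B1" "op_linear C1" using a unfolding Ve_def Wo_def by auto
    have R: "\<forall>f. inR (B1 f + C1 f)" using AR a(1) by (simp add: op_add_apply)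
    have R': "\<forall>f. inR (C1 f + B1 f)" using R by (simp add: add.commute)
    have "B1 \<in> Iset" unfolding Iset_def using J_in_Ve[OF a(2)] part_inR[OF h(3) h(1) _ R] h(2) by simp
    moreover have "C1 \<in> Iset" unfolding Iset_def using J_in_Wo[OF a(3)] part_inR[OF h(4) h(2) _ R'] h(1) by simp
    ultimately show "\<exists>B\<in>Iset. \<exists>C\<in>Iset. homog False B \<and> homog True C \<and> A = op_add B C"
      using a(1) h by blast
  qed
  show "\<forall>A\<in>(Jset :: 'k gop set). \<forall>B\<in>Iset. \<forall>p q. homog p A \<longrightarrow> homog q B \<longrightarrow> sbr p q A B \<in> Iset"
  proof (intro ballI allI impI)
    fix A B :: "'k gop" and p q assume a: "A \<in> Jset" "B \<in> Iset" "homog p A" "homog q B"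
    have BJ: "B \<in> Jset" and BR: "\<forall>f. inR (B f)" using a(2) unfolding Iset_def by auto
    have "sbr p q A B \<in> Jset" using J_sbr a(3,4) J_sub a(1) BJ by blast
    moreover have "inR (sbr p q A B f)" for f
    proof -
      have "A \<in> Wp p" using J_decomp[OF a(1,3)] by blast
      then have "inR (A (B f))" using inR_Wp BR by blast
      then show ?thesis unfolding sbr_apply by (rule inR_add[OF _ inR_sm[OF BR[rule_format]]])
    qed
    ultimately show "sbr p q A B \<in> Iset" unfolding Iset_def by blast
  qed
  show "(2::'k) = 0 \<longrightarrow> (\<forall>B\<in>(Iset :: 'k gop set). homog True B \<longrightarrow> B \<circ> B \<in> Iset)"
  proof (intro impI ballI)
    fix B :: "'k gop" assume a: "(2::'k) = 0" "B \<in> Iset" "homog True B"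
    have BJ: "B \<in> Jset" and BR: "\<forall>f. inR (B f)" using a(2) unfolding Iset_def by auto
    have "B \<circ> B \<in> Jset" using J_ideal a(1,3) BJ unfolding is_ideal_def by blast
    then show "B \<circ> B \<in> Iset" unfolding Iset_def using BR by simp
  qed
qed

definition zop :: "'k::field gop" where
  "zop = sbr False True (sbr True True (pivot 0) (pivot 1)) (pivot 1)"

lemma wop0: "sbr True True (pivot 0) (pivot 1) = (\<lambda>f. - xop 0 (pivot 3 (f::'k::field grass)))"
  using wop_eq[of 0] by simp

lemma homog_w: "homog False (\<lambda>f. - xop 0 (pivot 3 (f::'k::field grass)))"
  by (rule homog_uminus[OF homog_xv])

lemma w_Q: "(\<lambda>f. - xop 0 (pivot 3 (f::'k::field grass))) \<in> Qalg"
proof -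
  have "sbr True True (pivot 0) (pivot 1) \<in> (Qalg :: 'k gop set)"
    by (rule Q_sbr[OF Q_piv Q_piv homog_pivot homog_pivot]) simp_all
  then show ?thesis unfolding wop0 .
qed

lemma zop_eq: "zop = (\<lambda>f. xop 0 (xop 1 (xop 2 (xop 3 (pivot 6 (f::'k::field grass))))))"
proof (rule ext)
  fix f :: "'k grass"
  have "zop f = - xop 0 (pivot 3 (pivot 1 f)) + pivot 1 (xop 0 (pivot 3 f))"
    unfolding zop_def wop0 sbr_apply by (simp add: V_neg)
  also have "\<dots> = xop 0 (xop 1 (xop 2 (xop 3 (pivot 6 f))))" by (rule zlem)
  finally show "zop f = xop 0 (xop 1 (xop 2 (xop 3 (pivot 6 f))))" .
qed

lemma zop_Q: "zop \<in> (Qalg :: 'k::field gop set)"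
  unfolding zop_def wop0 by (rule Q_sbr[OF w_Q Q_piv homog_w homog_pivot]) simp

lemma zop_I: "zop \<in> (Iset :: 'k::field gop set)"
proof -
  have "(\<lambda>f. - xop 0 (pivot 3 (f::'k grass))) \<in> Vp False" by (rule Q_V[OF w_Q homog_w])
  moreover have "pivot 1 \<in> (Vp True :: 'k gop set)" by (rule Q_V[OF Q_piv homog_pivot]) simp
  ultimately have "sbr False True (\<lambda>f. - xop 0 (pivot 3 (f::'k grass))) (pivot 1) \<in> Wp (False \<noteq> True)"
    by (rule brk_V)
  then have "zop \<in> (Wo :: 'k gop set)" unfolding zop_def wop0 Wp_def by simp
  then have "zop \<in> (Jset :: 'k gop set)" using J_in_Wo zop_Q by blast
  moreover have "\<forall>f. inR (zop f :: 'k grass)" unfolding zop_eq by (intro allI) (rule inR_x)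
  ultimately show ?thesis unfolding Iset_def by blast
qed

lemma zop_nz: "zop \<noteq> (op_zero :: 'k::field gop)"
proof -
  have g6: "gmono {|6|} = xop 6 (gmono {||} :: 'k grass)"
    by (simp add: xop_mono gsign_def)
  have p0: "pivot 6 (gmono {||} :: 'k grass) = 0" by (rule pivot_mono0) simp
  have p6: "pivot 6 (gmono {|6|} :: 'k grass) = gmono {||}"
    unfolding g6 by (simp add: piv_x p0)
  have L: "Poly_Mapping.lookup (zop (gmono {|6|}) :: 'k grass) {|0,1,2,3|} \<noteq> 0"
    unfolding zop_eq p6 by (simp add: xop_mono xop_sm gsign_def lookup_gmono)
  show ?thesis
  proof
    assume a: "zop = (op_zero :: 'k gop)"
    have "zop (gmono {|6|}) = (op_zero (gmono {|6|}) :: 'k grass)" by (subst a) (rule refl)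
    then have "zop (gmono {|6|}) = (0 :: 'k grass)" by (simp only: op_zero_apply)
    then show False using L by simp
  qed
qed

lemma fsum_apply: "(sum f A) x = (\<Sum>a\<in>A. f a x :: 'c::comm_monoid_add)"
  by (induction A rule: infinite_finite_induct) auto

lemma I_not_fin: "\<not> fin_codim Jset (Iset :: 'k::field gop set)"
proof
  assume "fin_codim Jset (Iset :: 'k gop set)"
  then obtain F :: "'k gop set" where F: "finite F" "F \<subseteq> Jset"
    "Jset \<subseteq> {op_add B C | B C. B \<in> Iset \<and> C \<in> op_span F}"
    unfolding fin_codim_def by blast
  define psi :: "'k gop \<Rightarrow> nat \<Rightarrow> 'k" where "psi A = (\<lambda>m. Poly_Mapping.lookup (A (gmono {|m|})) {||})" for A
  define e :: "nat \<Rightarrow> nat \<Rightarrow> 'k" where "e n = (\<lambda>m. if m = n then 1 else 0)" for n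
  interpret vs: vector_space "\<lambda>(c::'k) (f::nat \<Rightarrow> 'k). (\<lambda>m. c * f m)"
    by unfold_locales (auto simp: fun_eq_iff algebra_simps)
  have span: "e n \<in> vs.span (psi ` F)" if n: "3 \<le> n" for n
  proof -
    have "pivot n \<in> (Jset :: 'k gop set)" using pivot_J n by blast
    then obtain B C where BC: "pivot n = op_add B C" "B \<in> Iset" "C \<in> op_span F" using F(3) by blast
    then obtain G c where GC: "C = (\<lambda>f. \<Sum>A\<in>G. gsmult (c A) (A f))" "finite G" "G \<subseteq> F"
      unfolding op_span_def by blast
    have "psi (pivot n) = e n" unfolding psi_def e_def by (rule ext) (simp add: psi_pivot)
    moreover have "psi B = 0"
      using BC(2) unfolding psi_def Iset_def by (auto simp: fun_eq_iff inR_empty)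
    moreover have "psi C = (\<Sum>A\<in>G. (\<lambda>m. c A * psi A m))"
      unfolding psi_def GC(1) by (rule ext) (simp add: fsum_apply lookup_sum)
    moreover have "psi (pivot n) = psi B + psi C"
      unfolding psi_def BC(1) by (rule ext) (simp add: op_add_apply lookup_add)
    ultimately have "e n = (\<Sum>A\<in>G. (\<lambda>m. c A * psi A m))" by simp
    also have "\<dots> \<in> vs.span (psi ` F)"
    proof (rule vs.span_sum)
      fix A assume "A \<in> G"
      then have "psi A \<in> psi ` F" using GC(3) by blast
      then show "(\<lambda>m. c A * psi A m) \<in> vs.span (psi ` F)" by (intro vs.span_scale vs.span_base)
    qed
    finally show ?thesis .
  qed
  define N where "N = {3..<card F + 4}"
  have injE: "inj_on e N"
  proof (rule inj_onI)
    fix a b assume "e a = e b"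
    then have "e a a = e b a" by simp
    then show "a = b" unfolding e_def by (simp split: if_splits)
  qed
  have fin: "finite (e ` N)" unfolding N_def by simp
  have indep: "vs.independent (e ` N)"
  proof
    assume "vs.dependent (e ` N)"
    then obtain u where u: "\<exists>v\<in>e ` N. u v \<noteq> 0" "(\<Sum>v\<in>e ` N. (\<lambda>m. u v * v m)) = 0"
      using vs.dependent_finite[OF fin] by blast
    have "u (e n) = 0" if "n \<in> N" for n
    proof -
      have "0 = (\<Sum>v\<in>e ` N. (\<lambda>m. u v * v m)) n" using u(2) by simp
      also have "\<dots> = (\<Sum>v\<in>e ` N. u v * v n)" by (simp add: fsum_apply)
      also have "\<dots> = (\<Sum>k\<in>N. u (e k) * e k n)" by (simp add: sum.reindex[OF injE])
      also have "\<dots> = (\<Sum>k\<in>N. if k = n then u (e n) else 0)"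
        by (rule sum.cong) (auto simp: e_def)
      also have "\<dots> = u (e n)" using that unfolding N_def by simp
      finally show ?thesis by simp
    qed
    then show False using u(1) by blast
  qed
  have "e ` N \<subseteq> vs.span (psi ` F)" using span unfolding N_def by auto
  then have "card (e ` N) \<le> card (psi ` F)"
    using vs.independent_span_bound[OF finite_imageI[OF F(1)] indep] by blast
  also have "\<dots> \<le> card F" by (rule card_image_le[OF F(1)])
  finally have "card N \<le> card F" using card_image[OF injE] by simp
  then show False unfolding N_def by simp
qed

theorem lemma7p5:
  shows "\<not> hereditary_just_infinite (Qalg :: 'k::field gop set) \<and>
    (\<exists>J. is_ideal (Qalg :: 'k gop set) J \<and> fin_codim Qalg J \<and>
       (\<exists>I. is_ideal J I \<and> I \<noteq> {op_zero} \<and> \<not> fin_codim J I))"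
proof -
  have ne: "Iset \<noteq> {op_zero :: 'k gop}" using zop_I zop_nz by blast
  have sec: "\<exists>J. is_ideal (Qalg :: 'k gop set) J \<and> fin_codim Qalg J \<and>
       (\<exists>I. is_ideal J I \<and> I \<noteq> {op_zero} \<and> \<not> fin_codim J I)"
    using J_ideal J_fin I_ideal ne I_not_fin by blast
  have "\<not> just_infinite (Jset :: 'k gop set)"
    unfolding just_infinite_def using I_ideal ne I_not_fin by blast
  then have "\<not> hereditary_just_infinite (Qalg :: 'k gop set)"
    unfolding hereditary_just_infinite_def using J_ideal J_fin by blast
  then show ?thesis using sec by blast
qed

end
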